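(* Let ${\bf r}=(r_0,r_1,\dots)$ be a finitely supported sequence of nonnegative integers with $n=\sum_{d\ge1}r_d\ge1$ and $\ell=-\sum_{d\ge0}(d-1)r_d\ge1$, and let $k\ge0$ be an integer. Then $$|\mathcal{CF}_{{\bf r},k}|=\binom{n}{r_1,r_2,\dots}\,\ell\,1^{r_1}2^{r_2}3^{r_3}\cdots\prod_{i=1}^{n-1}\big(r_0+i(1+k)\big).$$
   Context: A plane tree is an unlabelled rooted tree in which the children of every vertex are linearly ordered; a plane forest is a finite linearly ordered sequence of plane trees. For vertices $u,v$ in a tree, $v$ is a descendant of $u$ if $u$ lies on the path from the root to $v$ (so $u$ is a descendant of itself). The degree $d_v$ is the number of children of $v$; $v$ is internal if $d_v\ge1$. $I(F)$ is the set of internal vertices of $F$. A plane forest has type ${\bf r}$ if it has exactly $r_i$ vertices of degree $i$ for all $i\ge0$. A labelled forest is a plane forest $F$ together with a bijection (labelling) $I(F)\to[n]$. An internal vertex $v$ of a labelled forest is proper if no internal descendant of $v$ has a smaller label than $v$, and improper otherwise. Fix colors $c_1,c_2,\dots$ and distinct special colors $c_1',c_2',\dots$. A proper $k$-coloring of a labelled forest assigns to each internal vertex $v$ a color, taken from $\{c_1,\dots,c_{d_v}\}$ if $v$ is proper and from $\{c_1,\dots,c_{d_v}\}\cup\{c_1',\dots,c_k'\}$ if $v$ is improper. A $k$-colored labelled forest is a labelled forest together with a proper $k$-coloring; $\mathcal{CF}_{{\bf r},k}$ is the set of $k$-colored labelled forests whose underlying plane forest has type ${\bf r}$. *)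

theory Defs
  imports Main
begin

datatype ptree = Node "ptree list"

fun children :: "ptree \<Rightarrow> ptree list" where
  "children (Node ts) = ts"

fun subtree :: "ptree \<Rightarrow> nat list \<Rightarrow> ptree option" where
  "subtree t [] = Some t"
| "subtree (Node ts) (i # p) = (if i < length ts then subtree (ts ! i) p else None)"

text \<open>A plane forest is a list of plane trees. Its vertices are addressed by
  nonempty paths: the first index selects the tree, the rest descend.\<close>
type_synonym pforest = "ptree list"

definition fverts :: "pforest \<Rightarrow> nat list set" where
  "fverts F = {p. p \<noteq> [] \<and> subtree (Node F) p \<noteq> None}"

definition fdeg :: "pforest \<Rightarrow> nat list \<Rightarrow> nat" where
  "fdeg F p = length (children (the (subtree (Node F) p)))"

definition internal :: "pforest \<Rightarrow> nat list set" where
  "internal F = {v \<in> fverts F. fdeg F v \<ge> 1}"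

definition descendant :: "nat list \<Rightarrow> nat list \<Rightarrow> bool" where
  "descendant v u \<longleftrightarrow> (\<exists>w. v = u @ w)"

definition has_type :: "pforest \<Rightarrow> (nat \<Rightarrow> nat) \<Rightarrow> bool" where
  "has_type F r \<longleftrightarrow> (\<forall>i. card {v \<in> fverts F. fdeg F v = i} = r i)"

text \<open>Labelling: bijection from the internal vertices onto [n], n = |I(F)|;
  normalised to 0 outside I(F) so that labellings are determined by their values on I(F).\<close>
definition is_labelling :: "pforest \<Rightarrow> (nat list \<Rightarrow> nat) \<Rightarrow> bool" where
  "is_labelling F lab \<longleftrightarrow> bij_betw lab (internal F) {1..card (internal F)}
     \<and> (\<forall>v. v \<notin> internal F \<longrightarrow> lab v = 0)"

definition proper_vertex :: "pforest \<Rightarrow> (nat list \<Rightarrow> nat) \<Rightarrow> nat list \<Rightarrow> bool" where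
  "proper_vertex F lab v \<longleftrightarrow>
     (\<forall>w \<in> internal F. descendant w v \<longrightarrow> \<not> lab w < lab v)"

text \<open>Colors: Col j is c_j, Spec j is the special color c_j'.\<close>
datatype color = Col nat | Spec nat

definition allowed_colors :: "pforest \<Rightarrow> (nat list \<Rightarrow> nat) \<Rightarrow> nat \<Rightarrow> nat list \<Rightarrow> color set" where
  "allowed_colors F lab k v =
     {Col j | j. 1 \<le> j \<and> j \<le> fdeg F v} \<union>
     (if proper_vertex F lab v then {} else {Spec j | j. 1 \<le> j \<and> j \<le> k})"

definition is_proper_coloring ::
  "pforest \<Rightarrow> (nat list \<Rightarrow> nat) \<Rightarrow> nat \<Rightarrow> (nat list \<Rightarrow> color) \<Rightarrow> bool" where
  "is_proper_coloring F lab k col \<longleftrightarrow>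
     (\<forall>v \<in> internal F. col v \<in> allowed_colors F lab k v)
     \<and> (\<forall>v. v \<notin> internal F \<longrightarrow> col v = Col 0)"

definition CF :: "(nat \<Rightarrow> nat) \<Rightarrow> nat \<Rightarrow>
    (pforest \<times> (nat list \<Rightarrow> nat) \<times> (nat list \<Rightarrow> color)) set" where
  "CF r k = {(F, lab, col). has_type F r \<and> is_labelling F lab \<and> is_proper_coloring F lab k col}"

definition multinomial :: "nat \<Rightarrow> nat set \<Rightarrow> (nat \<Rightarrow> nat) \<Rightarrow> nat" where
  "multinomial n S r = fact n div (\<Prod>d\<in>S. fact (r d))"

end

theory Submission
  imports Defs "HOL-Library.FuncSet"
begin

lemma fverts_Nil[simp]: "fverts [] = {}"
  unfolding fverts_def by (auto simp: neq_Nil_conv)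

lemma fverts_ne: "q \<in> fverts F \<Longrightarrow> q \<noteq> []"
  unfolding fverts_def by auto

lemma internal_sub: "internal F \<subseteq> fverts F"
  unfolding internal_def by auto

lemma descendant_Cons_Cons: "descendant (j # p') (i # p) \<longleftrightarrow> j = i \<and> descendant p' p"
  unfolding descendant_def by auto

subsection \<open>Lukasiewicz step\<close>

fun lmap :: "nat \<Rightarrow> nat list \<Rightarrow> nat list" where
  "lmap d [] = []"
| "lmap d (i # p) = (if i < d then 0 # i # p else Suc (i - d) # p)"

fun linv :: "nat \<Rightarrow> nat list \<Rightarrow> nat list" where
  "linv d [] = []"
| "linv d (0 # q) = q"
| "linv d (Suc j # p) = (j + d) # p"

lemma lmap_linv: "q \<noteq> [] \<Longrightarrow> linv d (lmap d q) = q"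
  by (cases q) auto

lemma lmap_ne: "q \<noteq> [] \<Longrightarrow> lmap d q \<noteq> []"
  by (cases q) auto

lemma lmap_ne0: "lmap d q \<noteq> [0]"
  by (cases q) auto

lemma lmap_inj: "p \<noteq> [] \<Longrightarrow> q \<noteq> [] \<Longrightarrow> lmap d p = lmap d q \<Longrightarrow> p = q"
  by (metis lmap_linv)

lemma lmap_inj_on: "inj_on (lmap d) {q. q \<noteq> []}"
proof (rule inj_onI)
  fix x y assume "x \<in> {q. q \<noteq> []}" "y \<in> {q. q \<noteq> []}" "lmap d x = lmap d y"
  then show "x = y" using lmap_inj[of x y d] by simp
qed

lemma luk_sub: "q \<noteq> [] \<Longrightarrow>
  subtree (Node (Node ts # F')) (lmap (length ts) q) = subtree (Node (ts @ F')) q"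
  by (cases q) (auto simp: nth_append)

lemma luk_linv:
  assumes "q \<in> fverts (Node ts # F')" "q \<noteq> [0]"
  shows "linv (length ts) q \<in> fverts (ts @ F') \<and> lmap (length ts) (linv (length ts) q) = q"
proof -
  obtain i p where q: "q = i # p" using assms(1) fverts_ne by (cases q) auto
  have sq: "subtree (Node (Node ts # F')) q \<noteq> None" using assms(1) unfolding fverts_def by auto
  show ?thesis
  proof (cases i)
    case 0
    with q assms(2) obtain j p' where p: "p = j # p'" by (cases p) auto
    from sq q 0 p have j: "j < length ts" by (auto split: if_splits)
    have e1: "subtree (Node (Node ts # F')) (0 # j # p') = subtree (ts ! j) p'" using j by simp
    have e2: "subtree (Node (ts @ F')) (j # p') = subtree (ts ! j) p'"
      using j by (simp add: nth_append)
    show ?thesis using sq e1 e2 j unfolding q 0 p fverts_def by simp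
  next
    case (Suc j)
    from sq q Suc have j: "j < length F'" by (auto split: if_splits)
    have e1: "subtree (Node (Node ts # F')) (Suc j # p) = subtree (F' ! j) p" using j by simp
    have e2: "subtree (Node (ts @ F')) ((j + length ts) # p) = subtree (F' ! j) p"
      using j by (simp add: nth_append)
    show ?thesis using sq e1 e2 unfolding q Suc fverts_def by simp
  qed
qed

lemma luk_fverts: "fverts (Node ts # F') = insert [0] (lmap (length ts) ` fverts (ts @ F'))"
proof
  show "fverts (Node ts # F') \<subseteq> insert [0] (lmap (length ts) ` fverts (ts @ F'))"
  proof
    fix q assume q: "q \<in> fverts (Node ts # F')"
    show "q \<in> insert [0] (lmap (length ts) ` fverts (ts @ F'))"
    proof (cases "q = [0]")
      case False
      with luk_linv[OF q] show ?thesis by (metis image_eqI insertI2)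
    qed simp
  qed
next
  show "insert [0] (lmap (length ts) ` fverts (ts @ F')) \<subseteq> fverts (Node ts # F')"
    unfolding fverts_def using luk_sub lmap_ne by auto
qed

lemma luk_fdeg: "q \<noteq> [] \<Longrightarrow> fdeg (Node ts # F') (lmap (length ts) q) = fdeg (ts @ F') q"
  unfolding fdeg_def using luk_sub by simp

lemma luk_fdeg0: "fdeg (Node ts # F') [0] = length ts"
  unfolding fdeg_def by simp

lemma lmap_desc: "v \<noteq> [] \<Longrightarrow> w \<noteq> [] \<Longrightarrow> descendant (lmap d w) (lmap d v) \<longleftrightarrow> descendant w v"
  by (cases v; cases w) (auto simp: descendant_Cons_Cons)

lemma lmap_desc_root: "w \<noteq> [] \<Longrightarrow> descendant (lmap d w) [0] \<longleftrightarrow> hd w < d"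
  by (cases w) (auto simp: descendant_def)

lemma root_not_desc: "v \<noteq> [] \<Longrightarrow> \<not> descendant [0] (lmap d v)"
  by (cases v) (auto simp: descendant_def)

lemma hd_lmap: "w \<noteq> [] \<Longrightarrow> hd (lmap d w) = 0 \<longleftrightarrow> hd w < d"
  by (cases w) auto

lemma luk_internal:
  assumes "ts \<noteq> []"
  shows "internal (Node ts # F') = insert [0] (lmap (length ts) ` internal (ts @ F'))"
proof -
  have ne: "\<And>q. q \<in> fverts (ts @ F') \<Longrightarrow> q \<noteq> []" using fverts_ne by blast
  have fd: "\<forall>q\<in>fverts (ts @ F'). fdeg (Node ts # F') (lmap (length ts) q) = fdeg (ts @ F') q"
    using ne luk_fdeg by blast
  have "internal (Node ts # F') = {v \<in> insert [0] (lmap (length ts) ` fverts (ts @ F')). 1 \<le> fdeg (Node ts # F') v}"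
    by (simp add: internal_def luk_fverts)
  also have "\<dots> = insert [0] {v \<in> lmap (length ts) ` fverts (ts @ F'). 1 \<le> fdeg (Node ts # F') v}"
    using assms luk_fdeg0[of ts F'] by (cases ts) auto
  also have "{v \<in> lmap (length ts) ` fverts (ts @ F'). 1 \<le> fdeg (Node ts # F') v}
     = lmap (length ts) ` {v \<in> fverts (ts @ F'). 1 \<le> fdeg (ts @ F') v}"
    using fd by force
  finally show ?thesis unfolding internal_def[of "ts @ F'"] .
qed

fun tcnt :: "ptree \<Rightarrow> nat" where
  "tcnt (Node ts) = Suc (sum_list (map tcnt ts))"

definition fcnt :: "ptree list \<Rightarrow> nat" where
  "fcnt F = sum_list (map tcnt F)"

lemma fcnt_Cons: "fcnt (Node ts # F') = Suc (fcnt (ts @ F'))"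
  unfolding fcnt_def by simp

lemma fverts_fin_card: "finite (fverts F) \<and> card (fverts F) = fcnt F
   \<and> int (length F) = (\<Sum>v\<in>fverts F. 1 - int (fdeg F v))"
proof (induction "fcnt F" arbitrary: F rule: less_induct)
  case less
  show ?case
  proof (cases F)
    case Nil
    then show ?thesis by (simp add: fcnt_def)
  next
    case (Cons T F')
    obtain ts where T: "T = Node ts" by (cases T)
    let ?G = "ts @ F'"
    have IH: "finite (fverts ?G) \<and> card (fverts ?G) = fcnt ?G
       \<and> int (length ?G) = (\<Sum>v\<in>fverts ?G. 1 - int (fdeg ?G v))"
      using less[of ?G] Cons T fcnt_Cons by simp
    have inj: "inj_on (lmap (length ts)) (fverts ?G)"
      using lmap_inj_on by (rule inj_on_subset) (auto dest: fverts_ne)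
    have nin: "[0] \<notin> lmap (length ts) ` fverts ?G" by (metis imageE lmap_ne0)
    have fv: "fverts F = insert [0] (lmap (length ts) ` fverts ?G)"
      using Cons T luk_fverts by simp
    have "(\<Sum>v\<in>fverts F. 1 - int (fdeg F v)) =
        (1 - int (length ts)) + (\<Sum>v\<in>lmap (length ts) ` fverts ?G. 1 - int (fdeg F v))"
      using fv nin IH Cons T luk_fdeg0 by simp
    also have "(\<Sum>v\<in>lmap (length ts) ` fverts ?G. 1 - int (fdeg F v))
        = (\<Sum>v\<in>fverts ?G. 1 - int (fdeg ?G v))"
      using inj Cons T luk_fdeg fverts_ne by (simp add: sum.reindex)
    finally have s: "(\<Sum>v\<in>fverts F. 1 - int (fdeg F v)) = 1 - int (length ts) + (\<Sum>v\<in>fverts ?G. 1 - int (fdeg ?G v))" .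
    have fin: "finite (fverts F)" using fv IH by simp
    have "card (lmap (length ts) ` fverts ?G) = card (fverts ?G)" using inj by (rule card_image)
    then have card: "card (fverts F) = fcnt F" using fv nin IH Cons T fcnt_Cons by simp
    have lG: "int (length ?G) = (\<Sum>v\<in>fverts ?G. 1 - int (fdeg ?G v))" using IH by blast
    have len: "int (length F) = (\<Sum>v\<in>fverts F. 1 - int (fdeg F v))"
      unfolding s lG[symmetric] using Cons by simp
    show ?thesis using fin card len by blast
  qed
qed

lemma fverts_finite[simp]: "finite (fverts F)"
  using fverts_fin_card by blast

lemma internal_finite[simp]: "finite (internal F)"
  using internal_sub finite_subset fverts_finite by blast

lemma length_formula: "int (length F) = (\<Sum>v\<in>fverts F. 1 - int (fdeg F v))"
  using fverts_fin_card by blast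

lemma card_fverts: "card (fverts F) = fcnt F"
  using fverts_fin_card by blast

definition nrm :: "nat list set \<Rightarrow> (nat list \<Rightarrow> nat) \<Rightarrow> nat list \<Rightarrow> nat" where
  "nrm A f = (\<lambda>q. if q \<in> A then f q else 0)"

definition LS :: "ptree list \<Rightarrow> nat set \<Rightarrow> (nat list \<Rightarrow> nat) set" where
  "LS F S = {lab. bij_betw lab (internal F) S \<and> (\<forall>v. v \<notin> internal F \<longrightarrow> lab v = 0)}"

definition wt :: "nat \<Rightarrow> ptree list \<Rightarrow> (nat list \<Rightarrow> nat) \<Rightarrow> nat" where
  "wt k F lab = (\<Prod>v\<in>internal F. fdeg F v + (if proper_vertex F lab v then 0 else k))"

definition piso :: "ptree list \<Rightarrow> ptree list \<Rightarrow> (nat list \<Rightarrow> nat list) \<Rightarrow> (nat list \<Rightarrow> nat list) \<Rightarrow> bool" where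
  "piso F G \<pi> \<pi>' \<longleftrightarrow> (\<forall>q. q \<noteq> [] \<longrightarrow> \<pi>' (\<pi> q) = q \<and> \<pi> (\<pi>' q) = q \<and> \<pi> q \<noteq> [] \<and> \<pi>' q \<noteq> [] \<and>
       subtree (Node F) (\<pi> q) = subtree (Node G) q) \<and>
     (\<forall>v w. v \<noteq> [] \<longrightarrow> w \<noteq> [] \<longrightarrow> descendant (\<pi> w) (\<pi> v) = descendant w v)"

lemma pisoD:
  assumes "piso F G \<pi> \<pi>'" "q \<noteq> []"
  shows "\<pi>' (\<pi> q) = q" "\<pi> (\<pi>' q) = q" "\<pi> q \<noteq> []" "\<pi>' q \<noteq> []"
    "subtree (Node F) (\<pi> q) = subtree (Node G) q"
  using assms unfolding piso_def by blast+

lemma pisoD_desc: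
  assumes "piso F G \<pi> \<pi>'" "v \<noteq> []" "w \<noteq> []"
  shows "descendant (\<pi> w) (\<pi> v) = descendant w v"
  using assms unfolding piso_def by blast

lemma piso_sym:
  assumes p: "piso F G \<pi> \<pi>'"
  shows "piso G F \<pi>' \<pi>"
  unfolding piso_def
proof (intro conjI allI impI)
  fix q :: "nat list" assume q: "q \<noteq> []"
  show "\<pi> (\<pi>' q) = q" "\<pi>' (\<pi> q) = q" "\<pi>' q \<noteq> []" "\<pi> q \<noteq> []"
    using pisoD[OF p q] by auto
  have "subtree (Node F) (\<pi> (\<pi>' q)) = subtree (Node G) (\<pi>' q)"
    using pisoD[OF p pisoD(4)[OF p q]] by blast
  then show "subtree (Node G) (\<pi>' q) = subtree (Node F) q" using pisoD(2)[OF p q] by simp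
next
  fix v w :: "nat list" assume v: "v \<noteq> []" and w: "w \<noteq> []"
  have "descendant (\<pi> (\<pi>' w)) (\<pi> (\<pi>' v)) = descendant (\<pi>' w) (\<pi>' v)"
    using pisoD_desc[OF p pisoD(4)[OF p v] pisoD(4)[OF p w]] .
  then show "descendant (\<pi>' w) (\<pi>' v) = descendant w v" using pisoD(2)[OF p v] pisoD(2)[OF p w] by simp
qed

lemma piso_fverts:
  assumes p: "piso F G \<pi> \<pi>'"
  shows "fverts F = \<pi> ` fverts G"
proof (intro equalityI subsetI)
  fix q assume q: "q \<in> fverts F"
  hence ne: "q \<noteq> []" by (rule fverts_ne)
  have "subtree (Node F) (\<pi> (\<pi>' q)) = subtree (Node G) (\<pi>' q)"
    using pisoD[OF p pisoD(4)[OF p ne]] by blast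
  then have "\<pi>' q \<in> fverts G" using q pisoD(2,4)[OF p ne] unfolding fverts_def by simp
  then show "q \<in> \<pi> ` fverts G" using pisoD(2)[OF p ne] by (metis image_eqI)
next
  fix q assume "q \<in> \<pi> ` fverts G"
  then obtain q' where q': "q' \<in> fverts G" "q = \<pi> q'" by blast
  hence ne: "q' \<noteq> []" by (simp add: fverts_ne)
  show "q \<in> fverts F" using q' pisoD[OF p ne] unfolding fverts_def by simp
qed

lemma piso_fdeg:
  assumes p: "piso F G \<pi> \<pi>'" and q: "q \<noteq> []"
  shows "fdeg F (\<pi> q) = fdeg G q"
  unfolding fdeg_def using pisoD(5)[OF p q] by simp

lemma piso_inj:
  assumes p: "piso F G \<pi> \<pi>'"
  shows "inj_on \<pi> (fverts G)"
proof (rule inj_onI)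
  fix x y assume "x \<in> fverts G" "y \<in> fverts G" "\<pi> x = \<pi> y"
  then show "x = y" using pisoD(1)[OF p] fverts_ne by metis
qed

lemma piso_deg_set:
  assumes p: "piso F G \<pi> \<pi>'"
  shows "{v \<in> fverts F. P (fdeg F v)} = \<pi> ` {v \<in> fverts G. P (fdeg G v)}"
proof -
  have fd: "\<forall>q\<in>fverts G. fdeg F (\<pi> q) = fdeg G q" using piso_fdeg[OF p] fverts_ne by blast
  show ?thesis unfolding piso_fverts[OF p] using fd by force
qed

lemma piso_internal:
  assumes p: "piso F G \<pi> \<pi>'"
  shows "internal F = \<pi> ` internal G"
  unfolding internal_def using piso_deg_set[OF p, of "\<lambda>d. 1 \<le> d"] .

lemma piso_type:
  assumes p: "piso F G \<pi> \<pi>'"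
  shows "has_type F r = has_type G r"
proof -
  have "card {v \<in> fverts F. fdeg F v = i} = card {v \<in> fverts G. fdeg G v = i}" for i
  proof -
    have "inj_on \<pi> {v \<in> fverts G. fdeg G v = i}"
      using piso_inj[OF p] by (rule inj_on_subset) auto
    then show ?thesis using piso_deg_set[OF p, of "\<lambda>d. d = i"] by (simp add: card_image)
  qed
  then show ?thesis unfolding has_type_def by simp
qed

lemma piso_inj_internal:
  assumes p: "piso F G \<pi> \<pi>'"
  shows "inj_on \<pi> (internal G)"
  using piso_inj[OF p] internal_sub by (rule inj_on_subset)

lemma piso_LS:
  assumes p: "piso F G \<pi> \<pi>'" and lab: "lab \<in> LS F S"
  shows "nrm (internal G) (lab \<circ> \<pi>) \<in> LS G S"
proof -
  have b1: "bij_betw \<pi> (internal G) (internal F)"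
    using piso_inj_internal[OF p] piso_internal[OF p] by (simp add: bij_betw_def)
  have b2: "bij_betw lab (internal F) S" using lab unfolding LS_def by blast
  have "bij_betw (lab \<circ> \<pi>) (internal G) S" using bij_betw_trans[OF b1 b2] .
  then have "bij_betw (nrm (internal G) (lab \<circ> \<pi>)) (internal G) S"
    by (rule bij_betw_cong[THEN iffD1, rotated]) (simp add: nrm_def)
  then show ?thesis unfolding LS_def by (simp add: nrm_def)
qed

lemma piso_proper:
  assumes p: "piso F G \<pi> \<pi>'" and v: "v \<in> internal G"
  shows "proper_vertex G (nrm (internal G) (lab \<circ> \<pi>)) v \<longleftrightarrow> proper_vertex F lab (\<pi> v)"
proof -
  have vne: "v \<noteq> []" using v internal_sub fverts_ne by blast
  have "proper_vertex F lab (\<pi> v) \<longleftrightarrow>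
      (\<forall>w\<in>internal G. descendant (\<pi> w) (\<pi> v) \<longrightarrow> \<not> lab (\<pi> w) < lab (\<pi> v))"
    unfolding proper_vertex_def piso_internal[OF p] by blast
  also have "\<dots> \<longleftrightarrow> (\<forall>w\<in>internal G. descendant w v \<longrightarrow> \<not> lab (\<pi> w) < lab (\<pi> v))"
  proof -
    have "\<forall>w\<in>internal G. descendant (\<pi> w) (\<pi> v) = descendant w v"
      using pisoD_desc[OF p vne] internal_sub fverts_ne by blast
    then show ?thesis by auto
  qed
  also have "\<dots> \<longleftrightarrow> proper_vertex G (nrm (internal G) (lab \<circ> \<pi>)) v"
    unfolding proper_vertex_def using v by (auto simp: nrm_def)
  finally show ?thesis by simp
qed

lemma piso_wt:
  assumes p: "piso F G \<pi> \<pi>'"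
  shows "wt k G (nrm (internal G) (lab \<circ> \<pi>)) = wt k F lab"
proof -
  have "wt k F lab = (\<Prod>v\<in>\<pi> ` internal G. fdeg F v + (if proper_vertex F lab v then 0 else k))"
    unfolding wt_def piso_internal[OF p] ..
  also have "\<dots> = (\<Prod>v\<in>internal G. fdeg F (\<pi> v) + (if proper_vertex F lab (\<pi> v) then 0 else k))"
    using piso_inj_internal[OF p] by (simp add: prod.reindex)
  also have "\<dots> = wt k G (nrm (internal G) (lab \<circ> \<pi>))"
    unfolding wt_def
  proof (rule prod.cong[OF refl])
    fix v assume v: "v \<in> internal G"
    hence "v \<noteq> []" using internal_sub fverts_ne by blast
    then show "fdeg F (\<pi> v) + (if proper_vertex F lab (\<pi> v) then 0 else k) =
       fdeg G v + (if proper_vertex G (nrm (internal G) (lab \<circ> \<pi>)) v then 0 else k)"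
      using piso_fdeg[OF p] piso_proper[OF p v] by simp
  qed
  finally show ?thesis by simp
qed

lemma piso_back:
  assumes p: "piso F G \<pi> \<pi>'" and lab: "lab \<in> LS F S"
  shows "nrm (internal F) (nrm (internal G) (lab \<circ> \<pi>) \<circ> \<pi>') = lab"
proof
  fix q
  show "nrm (internal F) (nrm (internal G) (lab \<circ> \<pi>) \<circ> \<pi>') q = lab q"
  proof (cases "q \<in> internal F")
    case True
    then obtain q' where q': "q' \<in> internal G" "q = \<pi> q'" using piso_internal[OF p] by blast
    hence "q' \<noteq> []" using internal_sub fverts_ne by blast
    hence "\<pi>' q = q'" using q' pisoD(1)[OF p] by simp
    then show ?thesis using True q' by (simp add: nrm_def)
  next
    case False
    then show ?thesis using lab unfolding LS_def nrm_def by simp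
  qed
qed

lemma piso_intree:
  assumes p: "piso F G \<pi> \<pi>'"
  shows "(\<exists>v\<in>internal G. nrm (internal G) (lab \<circ> \<pi>) v = m \<and> P v)
     \<longleftrightarrow> (\<exists>v\<in>internal F. lab v = m \<and> P (\<pi>' v))"
proof -
  have ne: "\<forall>v\<in>internal G. v \<noteq> []" using internal_sub fverts_ne by blast
  have "(\<exists>v\<in>internal G. nrm (internal G) (lab \<circ> \<pi>) v = m \<and> P v)
     \<longleftrightarrow> (\<exists>v\<in>internal G. lab (\<pi> v) = m \<and> P (\<pi>' (\<pi> v)))"
    using ne pisoD(1)[OF p] by (auto simp: nrm_def)
  also have "\<dots> \<longleftrightarrow> (\<exists>v\<in>internal F. lab v = m \<and> P (\<pi>' v))"
    unfolding piso_internal[OF p] by blast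
  finally show ?thesis .
qed

section \<open>Rotation\<close>

fun rmap :: "nat \<Rightarrow> nat list \<Rightarrow> nat list" where
  "rmap l [] = []"
| "rmap l (i # p) = (if Suc i < l then Suc i else if i < l then 0 else i) # p"

fun rinv :: "nat \<Rightarrow> nat list \<Rightarrow> nat list" where
  "rinv l [] = []"
| "rinv l (i # p) = (if i = 0 \<and> 0 < l then l - 1 else if i < l then i - 1 else i) # p"

definition rot :: "ptree list \<Rightarrow> ptree list" where "rot F = tl F @ [hd F]"
definition unrot :: "ptree list \<Rightarrow> ptree list" where "unrot G = last G # butlast G"

lemma rot_unrot: "G \<noteq> [] \<Longrightarrow> rot (unrot G) = G"
  unfolding rot_def unrot_def by simp

lemma unrot_rot: "F \<noteq> [] \<Longrightarrow> unrot (rot F) = F"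
  unfolding rot_def unrot_def by (cases F) auto

lemma length_unrot: "G \<noteq> [] \<Longrightarrow> length (unrot G) = length G"
  unfolding unrot_def by (cases G) auto

lemma length_rot: "F \<noteq> [] \<Longrightarrow> length (rot F) = length F"
  unfolding rot_def by (cases F) auto

lemma rot_ne: "rot F \<noteq> []" unfolding rot_def by simp
lemma unrot_ne: "unrot F \<noteq> []" unfolding unrot_def by simp

lemma rot_piso:
  assumes "F \<noteq> []"
  shows "piso F (rot F) (rmap (length F)) (rinv (length F))"
proof -
  obtain x xs where F: "F = x # xs" using assms by (cases F) auto
  show ?thesis unfolding piso_def
  proof (intro conjI allI impI)
    fix q :: "nat list" assume "q \<noteq> []"
    then obtain i p where q: "q = i # p" by (cases q) auto
    show "rinv (length F) (rmap (length F) q) = q" unfolding q by auto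
    show "rmap (length F) (rinv (length F) q) = q" unfolding q by auto
    show "rmap (length F) q \<noteq> []" "rinv (length F) q \<noteq> []" unfolding q by auto
    show "subtree (Node F) (rmap (length F) q) = subtree (Node (rot F)) q"
    proof (cases "i < length xs")
      case True
      then show ?thesis unfolding q F rot_def by (simp add: nth_append)
    next
      case False
      show ?thesis
      proof (cases "i = length xs")
        case True
        then show ?thesis unfolding q F rot_def by simp
      next
        case False
        with \<open>\<not> i < length xs\<close> show ?thesis unfolding q F rot_def by simp
      qed
    qed
  next
    fix v w :: "nat list" assume "v \<noteq> []" "w \<noteq> []"
    then obtain i p j p' where "v = i # p" "w = j # p'" by (cases v; cases w) auto
    then show "descendant (rmap (length F) w) (rmap (length F) v) = descendant w v"
      by (auto simp: descendant_Cons_Cons split: if_splits)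
  qed
qed

lemma hd_rmap: "v \<noteq> [] \<Longrightarrow> Suc j < L \<Longrightarrow> hd (rmap L v) = Suc j \<longleftrightarrow> hd v = j"
  by (cases v) auto

lemma hd_rinv: "v \<noteq> [] \<Longrightarrow> Suc j < L \<Longrightarrow> hd (rinv L v) = j \<longleftrightarrow> hd v = Suc j"
  by (cases v) auto

lemma hd_fverts: "v \<in> fverts F \<Longrightarrow> hd v < length F"
  unfolding fverts_def by (cases v) (auto split: if_splits)

lemma tcnt_pos: "1 \<le> tcnt T" by (cases T) auto

lemma fcnt_Cons': "fcnt (T # F) = tcnt T + fcnt F" unfolding fcnt_def by simp

lemma fcnt_ge_length: "length F \<le> fcnt F"
proof (induction F)
  case Nil then show ?case by (simp add: fcnt_def)
next
  case (Cons T F) then show ?case using tcnt_pos[of T] by (simp add: fcnt_Cons')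
qed

lemma tcnt_le: "T \<in> set F \<Longrightarrow> tcnt T \<le> fcnt F"
  unfolding fcnt_def by (rule member_le_sum_list) auto

lemma finite_fcnt_le: "finite {F. fcnt F \<le> M}"
proof (induction M rule: less_induct)
  case (less M)
  have tr: "finite {T. tcnt T \<le> M}"
  proof (cases M)
    case 0
    have "\<not> tcnt T \<le> M" for T using tcnt_pos[of T] 0 by simp
    then have "{T. tcnt T \<le> M} = {}" by blast
    then show ?thesis by simp
  next
    case (Suc M')
    have "{T. tcnt T \<le> M} \<subseteq> Node ` {F. fcnt F \<le> M'}"
    proof
      fix T assume "T \<in> {T. tcnt T \<le> M}"
      moreover obtain ts where "T = Node ts" by (cases T)
      ultimately show "T \<in> Node ` {F. fcnt F \<le> M'}" using Suc by (auto simp: fcnt_def)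
    qed
    moreover have "finite {F. fcnt F \<le> M'}" using less Suc by simp
    ultimately show ?thesis by (meson finite_imageI finite_subset)
  qed
  have "{F. fcnt F \<le> M} \<subseteq> {xs. set xs \<subseteq> {T. tcnt T \<le> M} \<and> length xs \<le> M}"
    using fcnt_ge_length tcnt_le le_trans by fastforce
  moreover have "finite {xs. set xs \<subseteq> {T. tcnt T \<le> M} \<and> length xs \<le> M}"
    using finite_lists_length_le[OF tr] .
  ultimately show ?case by (rule finite_subset)
qed

definition FT :: "(nat \<Rightarrow> nat) \<Rightarrow> ptree list set" where
  "FT r = {F. has_type F r}"

lemma type_card:
  assumes t: "has_type F r" and N: "\<forall>i>N. r i = 0"
  shows "card (fverts F) = (\<Sum>i\<le>N. r i)"
proof -
  have "fverts F = (\<Union>i\<in>{..N}. {v\<in>fverts F. fdeg F v = i})"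
  proof (intro equalityI subsetI)
    fix v assume v: "v \<in> fverts F"
    have "fdeg F v \<le> N"
    proof (rule ccontr)
      assume "\<not> fdeg F v \<le> N"
      then have "r (fdeg F v) = 0" using N by simp
      then have "card {w\<in>fverts F. fdeg F w = fdeg F v} = 0" using t unfolding has_type_def by simp
      moreover have "v \<in> {w\<in>fverts F. fdeg F w = fdeg F v}" using v by simp
      moreover have "finite {w\<in>fverts F. fdeg F w = fdeg F v}" by simp
      ultimately show False by (metis card_0_eq empty_iff)
    qed
    then show "v \<in> (\<Union>i\<in>{..N}. {v\<in>fverts F. fdeg F v = i})" using v by auto
  qed auto
  then have "card (fverts F) = card (\<Union>i\<in>{..N}. {v\<in>fverts F. fdeg F v = i})"
    by (rule arg_cong)
  also have "\<dots> = (\<Sum>i\<le>N. card {v\<in>fverts F. fdeg F v = i})"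
    by (rule card_UN_disjoint) auto
  also have "\<dots> = (\<Sum>i\<le>N. r i)" using t unfolding has_type_def by simp
  finally show ?thesis .
qed

lemma FT_finite:
  assumes N: "\<forall>i>N. r i = 0"
  shows "finite (FT r)"
proof -
  have "FT r \<subseteq> {F. fcnt F \<le> (\<Sum>i\<le>N. r i)}"
    unfolding FT_def using type_card[OF _ N] card_fverts by auto
  then show ?thesis using finite_fcnt_le finite_subset by blast
qed

lemma LS_finite:
  assumes "finite S"
  shows "finite (LS F S)"
proof -
  have "LS F S \<subseteq> nrm (internal F) ` (PiE (internal F) (\<lambda>_. S))"
  proof
    fix lab assume lab: "lab \<in> LS F S"
    then have im: "lab ` internal F = S" and z: "\<forall>v. v \<notin> internal F \<longrightarrow> lab v = 0"
      unfolding LS_def bij_betw_def by auto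
    have "restrict lab (internal F) \<in> PiE (internal F) (\<lambda>_. S)" using im by auto
    moreover have "lab = nrm (internal F) (restrict lab (internal F))"
      using z by (auto simp: nrm_def)
    ultimately show "lab \<in> nrm (internal F) ` (PiE (internal F) (\<lambda>_. S))" by blast
  qed
  moreover have "finite (PiE (internal F) (\<lambda>_. S))" using assms by (simp add: finite_PiE)
  ultimately show ?thesis using finite_subset by blast
qed

definition PS :: "(nat \<Rightarrow> nat) \<Rightarrow> nat set \<Rightarrow> (ptree list \<times> (nat list \<Rightarrow> nat)) set" where
  "PS r S = Sigma (FT r) (\<lambda>F. LS F S)"

lemma PS_finite: "\<forall>i>N. r i = 0 \<Longrightarrow> finite S \<Longrightarrow> finite (PS r S)"
  unfolding PS_def using FT_finite LS_finite by blast

definition intree :: "ptree list \<Rightarrow> (nat list \<Rightarrow> nat) \<Rightarrow> nat \<Rightarrow> nat set \<Rightarrow> bool" where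
  "intree F lab m J \<longleftrightarrow> (\<exists>v\<in>internal F. lab v = m \<and> hd v \<in> J)"

definition Usum :: "nat \<Rightarrow> (nat \<Rightarrow> nat) \<Rightarrow> nat set \<Rightarrow> nat set \<Rightarrow> nat" where
  "Usum k r S J = (\<Sum>x\<in>{x\<in>PS r S. intree (fst x) (snd x) (Min S) J}. wt k (fst x) (snd x))"

definition Tsum :: "nat \<Rightarrow> (nat \<Rightarrow> nat) \<Rightarrow> nat set \<Rightarrow> nat" where
  "Tsum k r S = (\<Sum>x\<in>PS r S. wt k (fst x) (snd x))"

definition rotP :: "nat \<Rightarrow> ptree list \<times> (nat list \<Rightarrow> nat) \<Rightarrow> ptree list \<times> (nat list \<Rightarrow> nat)" where
  "rotP L x = (rot (fst x), nrm (internal (rot (fst x))) (snd x \<circ> rmap L))"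
definition unrotP :: "nat \<Rightarrow> ptree list \<times> (nat list \<Rightarrow> nat) \<Rightarrow> ptree list \<times> (nat list \<Rightarrow> nat)" where
  "unrotP L x = (unrot (fst x), nrm (internal (unrot (fst x))) (snd x \<circ> rinv L))"

lemma rot_facts_G:
  assumes len: "\<forall>F\<in>FT r. length F = L" and j: "Suc j < L"
    and x: "x \<in> {x \<in> PS r S. intree (fst x) (snd x) m {j}}"
  shows "unrotP L x \<in> {x \<in> PS r S. intree (fst x) (snd x) m {Suc j}}"
    "rotP L (unrotP L x) = x" "wt k (fst (unrotP L x)) (snd (unrotP L x)) = wt k (fst x) (snd x)"
proof -
  obtain G lab where x': "x = (G, lab)" by (cases x)
  have G: "G \<in> FT r" and lab: "lab \<in> LS G S" and it: "intree G lab m {j}"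
    using x x' unfolding PS_def by auto
  have Gne: "G \<noteq> []" using len G j by auto
  have "piso (unrot G) (rot (unrot G)) (rmap (length (unrot G))) (rinv (length (unrot G)))"
    using rot_piso unrot_ne by blast
  then have p: "piso G (unrot G) (rinv L) (rmap L)"
    using rot_unrot[OF Gne] length_unrot[OF Gne] len G by (simp add: piso_sym)
  show "rotP L (unrotP L x) = x"
    using piso_back[OF p lab] rot_unrot[OF Gne] x' unfolding rotP_def unrotP_def by simp
  have "unrot G \<in> FT r" using piso_type[OF p] G unfolding FT_def by simp
  moreover have "nrm (internal (unrot G)) (lab \<circ> rinv L) \<in> LS (unrot G) S" using piso_LS[OF p lab] .
  moreover have "intree (unrot G) (nrm (internal (unrot G)) (lab \<circ> rinv L)) m {Suc j}"
  proof -
    from it obtain v where v: "v \<in> internal G" "lab v = m" "hd v = j" unfolding intree_def by auto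
    have "v \<noteq> []" using v(1) internal_sub fverts_ne by blast
    then have "hd (rmap L v) = Suc j" using hd_rmap[OF _ j] v(3) by blast
    then have "\<exists>v\<in>internal G. lab v = m \<and> hd (rmap L v) \<in> {Suc j}" using v by blast
    then show ?thesis unfolding intree_def
      by (rule piso_intree[OF p, of lab m "\<lambda>v. hd v \<in> {Suc j}", THEN iffD2])
  qed
  ultimately show "unrotP L x \<in> {x \<in> PS r S. intree (fst x) (snd x) m {Suc j}}"
    using x' unfolding PS_def unrotP_def by simp
  show "wt k (fst (unrotP L x)) (snd (unrotP L x)) = wt k (fst x) (snd x)"
    using piso_wt[OF p] x' unfolding unrotP_def by simp
qed

lemma rot_facts_F:
  assumes len: "\<forall>F\<in>FT r. length F = L" and j: "Suc j < L"
    and x: "x \<in> {x \<in> PS r S. intree (fst x) (snd x) m {Suc j}}"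
  shows "rotP L x \<in> {x \<in> PS r S. intree (fst x) (snd x) m {j}}"
    "unrotP L (rotP L x) = x"
proof -
  obtain F lab where x': "x = (F, lab)" by (cases x)
  have F: "F \<in> FT r" and lab: "lab \<in> LS F S" and it: "intree F lab m {Suc j}"
    using x x' unfolding PS_def by auto
  have Fne: "F \<noteq> []" using len F j by auto
  have p: "piso F (rot F) (rmap L) (rinv L)" using rot_piso[OF Fne] len F by simp
  show "unrotP L (rotP L x) = x"
    using piso_back[OF p lab] unrot_rot[OF Fne] x' unfolding rotP_def unrotP_def by simp
  have "rot F \<in> FT r" using piso_type[OF p] F unfolding FT_def by simp
  moreover have "nrm (internal (rot F)) (lab \<circ> rmap L) \<in> LS (rot F) S" using piso_LS[OF p lab] .
  moreover have "intree (rot F) (nrm (internal (rot F)) (lab \<circ> rmap L)) m {j}"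
  proof -
    from it obtain v where v: "v \<in> internal F" "lab v = m" "hd v = Suc j" unfolding intree_def by auto
    have "v \<noteq> []" using v(1) internal_sub fverts_ne by blast
    then have "hd (rinv L v) = j" using hd_rinv[OF _ j] v(3) by blast
    then have "\<exists>v\<in>internal F. lab v = m \<and> hd (rinv L v) \<in> {j}" using v by blast
    then show ?thesis unfolding intree_def
      by (rule piso_intree[OF p, of lab m "\<lambda>v. hd v \<in> {j}", THEN iffD2])
  qed
  ultimately show "rotP L x \<in> {x \<in> PS r S. intree (fst x) (snd x) m {j}}"
    using x' unfolding PS_def rotP_def by simp
qed

lemma Usum_rot:
  assumes len: "\<forall>F\<in>FT r. length F = L" and j: "Suc j < L"
  shows "Usum k r S {j} = Usum k r S {Suc j}"
  unfolding Usum_def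
  apply (rule sum.reindex_bij_witness[where j = "unrotP L" and i = "rotP L"])
  apply (erule rot_facts_G(2)[OF len j])
  apply (erule rot_facts_G(1)[OF len j])
  apply (erule rot_facts_F(2)[OF len j])
  apply (erule rot_facts_F(1)[OF len j])
  apply (erule rot_facts_G(3)[OF len j])
  done

lemma Usum_const:
  assumes len: "\<forall>F\<in>FT r. length F = L" and j: "j < L"
  shows "Usum k r S {j} = Usum k r S {0}"
  using j
proof (induction j)
  case (Suc j)
  then show ?case using Usum_rot[OF len, of j k S] by simp
qed simp

lemma Usum_split:
  assumes N: "\<forall>i>N. r i = 0" and S: "finite S" and J: "finite J"
  shows "Usum k r S J = (\<Sum>j\<in>J. Usum k r S {j})"
proof -
  let ?A = "\<lambda>j. {x\<in>PS r S. intree (fst x) (snd x) (Min S) {j}}"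
  have eq: "{x\<in>PS r S. intree (fst x) (snd x) (Min S) J} = (\<Union>j\<in>J. ?A j)"
    unfolding intree_def by blast
  have fin: "\<forall>j\<in>J. finite (?A j)" using PS_finite[OF N S] by simp
  have disj: "\<forall>i\<in>J. \<forall>j\<in>J. i \<noteq> j \<longrightarrow> ?A i \<inter> ?A j = {}"
  proof (intro ballI impI)
    fix i j assume "i \<in> J" "j \<in> J" "i \<noteq> j"
    show "?A i \<inter> ?A j = {}"
    proof (rule ccontr)
      assume "?A i \<inter> ?A j \<noteq> {}"
      then obtain y where y: "y \<in> ?A i" "y \<in> ?A j" by blast
      obtain F lab where yy: "y = (F, lab)" by (cases y)
      have x: "(F, lab) \<in> ?A i" "(F, lab) \<in> ?A j" using y yy by auto
      then have inj: "inj_on lab (internal F)" unfolding PS_def LS_def bij_betw_def by auto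
      from x obtain v w where "v \<in> internal F" "lab v = Min S" "hd v = i"
        "w \<in> internal F" "lab w = Min S" "hd w = j" unfolding intree_def by auto
      then show False using inj \<open>i \<noteq> j\<close> by (metis inj_onD)
    qed
  qed
  show ?thesis unfolding Usum_def eq
    by (rule sum.UNION_disjoint[OF J fin disj])
qed

lemma Usum_lessThan:
  assumes N: "\<forall>i>N. r i = 0" and S: "finite S" and len: "\<forall>F\<in>FT r. length F = L" and d: "d \<le> L"
  shows "Usum k r S {..<d} = d * Usum k r S {0}"
proof -
  have "Usum k r S {..<d} = (\<Sum>j\<in>{..<d}. Usum k r S {j})" by (rule Usum_split[OF N S]) simp
  also have "\<dots> = (\<Sum>j\<in>{..<d}. Usum k r S {0})"
  proof (rule sum.cong[OF refl])
    fix j assume "j \<in> {..<d}"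
    then show "Usum k r S {j} = Usum k r S {0}" by (intro Usum_const[OF len]) (use d in auto)
  qed
  finally show ?thesis by simp
qed

lemma Tsum_Usum:
  assumes N: "\<forall>i>N. r i = 0" and S: "finite S" "S \<noteq> {}" and len: "\<forall>F\<in>FT r. length F = L"
  shows "Tsum k r S = L * Usum k r S {0}"
proof -
  have "{x\<in>PS r S. intree (fst x) (snd x) (Min S) {..<L}} = PS r S"
  proof (intro equalityI subsetI)
    fix x assume x: "x \<in> PS r S"
    obtain F lab where x': "x = (F, lab)" by (cases x)
    have F: "F \<in> FT r" and lab: "bij_betw lab (internal F) S" using x x' unfolding PS_def LS_def by auto
    have "Min S \<in> S" using S by simp
    then obtain v where v: "v \<in> internal F" "lab v = Min S" using lab unfolding bij_betw_def by auto
    have "hd v < L" using hd_fverts[of v F] v internal_sub len F by auto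
    then show "x \<in> {x\<in>PS r S. intree (fst x) (snd x) (Min S) {..<L}}"
      using x x' v unfolding intree_def by auto
  qed auto
  then have "Tsum k r S = Usum k r S {..<L}" unfolding Tsum_def Usum_def by simp
  also have "\<dots> = L * Usum k r S {0}" using Usum_lessThan[OF N S(1) len] by simp
  finally show ?thesis .
qed

section \<open>Lukasiewicz decomposition with labels\<close>

lemma luk_deg_set:
  "{v \<in> fverts (Node ts # F'). fdeg (Node ts # F') v = i} =
   (if i = length ts then insert [0] else id) (lmap (length ts) ` {v \<in> fverts (ts @ F'). fdeg (ts @ F') v = i})"
proof -
  have fd: "\<forall>q\<in>fverts (ts @ F'). fdeg (Node ts # F') (lmap (length ts) q) = fdeg (ts @ F') q"
    using fverts_ne luk_fdeg by blast
  have "{v \<in> fverts (Node ts # F'). fdeg (Node ts # F') v = i} =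
     {v \<in> insert [0] (lmap (length ts) ` fverts (ts @ F')). fdeg (Node ts # F') v = i}"
    by (simp add: luk_fverts)
  also have "\<dots> = (if i = length ts then insert [0] else id)
      {v \<in> lmap (length ts) ` fverts (ts @ F'). fdeg (Node ts # F') v = i}"
    using luk_fdeg0[of ts F'] by auto
  also have "{v \<in> lmap (length ts) ` fverts (ts @ F'). fdeg (Node ts # F') v = i}
     = lmap (length ts) ` {v \<in> fverts (ts @ F'). fdeg (ts @ F') v = i}"
    using fd by force
  finally show ?thesis .
qed

lemma luk_deg_card:
  "card {v \<in> fverts (Node ts # F'). fdeg (Node ts # F') v = i} =
   card {v \<in> fverts (ts @ F'). fdeg (ts @ F') v = i} + (if i = length ts then 1 else 0)"
proof -
  let ?X = "{v \<in> fverts (ts @ F'). fdeg (ts @ F') v = i}"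
  have inj: "inj_on (lmap (length ts)) ?X"
    using lmap_inj_on by (rule inj_on_subset) (auto dest: fverts_ne)
  have c: "card (lmap (length ts) ` ?X) = card ?X" using inj by (rule card_image)
  have nin: "[0] \<notin> lmap (length ts) ` ?X" by (metis imageE lmap_ne0)
  have fin: "finite (lmap (length ts) ` ?X)" by simp
  have ci: "card (insert [0] (lmap (length ts) ` ?X)) = Suc (card ?X)" using c nin fin by simp
  show ?thesis
  proof (cases "i = length ts")
    case True
    then show ?thesis unfolding luk_deg_set[of ts F' i] using ci by simp
  next
    case False
    then show ?thesis unfolding luk_deg_set[of ts F' i] using c by simp
  qed
qed

lemma luk_type:
  "has_type (Node ts # F') r \<longleftrightarrow>
     1 \<le> r (length ts) \<and> has_type (ts @ F') (r(length ts := r (length ts) - 1))"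
proof -
  have gen: "(\<forall>i. c i + (if i = d then 1 else 0) = r i) \<longleftrightarrow> 1 \<le> r d \<and> (\<forall>i. c i = (r(d := r d - 1)) i)"
    for c :: "nat \<Rightarrow> nat" and d
  proof
    assume h: "\<forall>i. c i + (if i = d then 1 else 0) = r i"
    have "c d + 1 = r d" using h[rule_format, of d] by simp
    moreover have "c i = (r(d := r d - 1)) i" for i using h[rule_format, of i] by (cases "i = d") auto
    ultimately show "1 \<le> r d \<and> (\<forall>i. c i = (r(d := r d - 1)) i)" by auto
  next
    assume h: "1 \<le> r d \<and> (\<forall>i. c i = (r(d := r d - 1)) i)"
    show "\<forall>i. c i + (if i = d then 1 else 0) = r i"
    proof
      fix i show "c i + (if i = d then 1 else 0) = r i" using h by (cases "i = d") auto
    qed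
  qed
  show ?thesis unfolding has_type_def luk_deg_card
    by (rule gen[of "\<lambda>i. card {v \<in> fverts (ts @ F'). fdeg (ts @ F') v = i}"])
qed

lemma luk_LS_fwd:
  assumes ts: "ts \<noteq> []" and lab: "lab \<in> LS (Node ts # F') S"
  shows "nrm (internal (ts @ F')) (lab \<circ> lmap (length ts)) \<in> LS (ts @ F') (S - {lab [0]})"
proof -
  let ?d = "length ts" and ?G = "ts @ F'" and ?F = "Node ts # F'"
  let ?X = "lmap ?d ` internal ?G"
  have iF: "internal ?F = ?X \<union> {[0]}" using luk_internal[OF ts] by auto
  have nin: "[0] \<notin> ?X" by (metis imageE lmap_ne0)
  have b: "bij_betw lab (?X \<union> {[0]}) S" using lab iF unfolding LS_def by simp
  have aS: "lab [0] \<in> S" using b unfolding bij_betw_def by auto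
  have "lab [0] \<notin> lab ` ?X"
  proof
    assume "lab [0] \<in> lab ` ?X"
    then obtain x where "x \<in> ?X" "lab x = lab [0]" by (metis (no_types, lifting) imageE)
    moreover have "inj_on lab (?X \<union> {[0]})" using b unfolding bij_betw_def by blast
    ultimately show False using nin by (metis UnI1 UnI2 inj_onD singletonI)
  qed
  then have "lab [0] \<notin> S - {lab [0]}" by simp
  have bX: "bij_betw lab ?X (S - {lab [0]})"
  proof -
    have "S = (S - {lab [0]}) \<union> {lab [0]}" using aS by auto
    then have "bij_betw lab (?X \<union> {[0]}) ((S - {lab [0]}) \<union> {lab [0]})" using b by simp
    then show ?thesis using notIn_Un_bij_betw3[OF nin, of lab "S - {lab [0]}"] by simp
  qed
  have bl: "bij_betw (lmap ?d) (internal ?G) ?X"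
    using lmap_inj_on by (intro bij_betw_imageI, rule inj_on_subset) (auto dest: fverts_ne[OF internal_sub[THEN subsetD]])
  have "bij_betw (lab \<circ> lmap ?d) (internal ?G) (S - {lab [0]})"
    using bij_betw_trans[OF bl bX] .
  then have "bij_betw (nrm (internal ?G) (lab \<circ> lmap ?d)) (internal ?G) (S - {lab [0]})"
    by (rule bij_betw_cong[THEN iffD1, rotated]) (simp add: nrm_def)
  then show ?thesis unfolding LS_def by (simp add: nrm_def)
qed

definition ulab :: "nat \<Rightarrow> nat list set \<Rightarrow> nat \<Rightarrow> (nat list \<Rightarrow> nat) \<Rightarrow> nat list \<Rightarrow> nat" where
  "ulab d I a lab' = nrm I (\<lambda>q. if q = [0] then a else lab' (linv d q))"

lemma ulab_lmap:
  assumes ts: "ts \<noteq> []" and w: "w \<in> internal (ts @ F')"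
  shows "ulab (length ts) (internal (Node ts # F')) a lab' (lmap (length ts) w) = lab' w"
proof -
  have "w \<noteq> []" using w internal_sub fverts_ne by blast
  then show ?thesis using w luk_internal[OF ts] lmap_linv lmap_ne0
    unfolding ulab_def nrm_def by auto
qed

lemma ulab_root:
  assumes ts: "ts \<noteq> []"
  shows "ulab (length ts) (internal (Node ts # F')) a lab' [0] = a"
  using luk_internal[OF ts] unfolding ulab_def nrm_def by auto

lemma luk_LS_bwd:
  assumes ts: "ts \<noteq> []" and lab': "lab' \<in> LS (ts @ F') (S - {a})" and a: "a \<in> S"
  shows "ulab (length ts) (internal (Node ts # F')) a lab' \<in> LS (Node ts # F') S"
proof -
  let ?d = "length ts" and ?G = "ts @ F'" and ?F = "Node ts # F'"
  let ?X = "lmap ?d ` internal ?G"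
  let ?lab = "ulab ?d (internal ?F) a lab'"
  have iF: "internal ?F = ?X \<union> {[0]}" using luk_internal[OF ts] by auto
  have nin: "[0] \<notin> ?X" by (metis imageE lmap_ne0)
  have bl: "bij_betw (lmap ?d) (internal ?G) ?X"
    using lmap_inj_on by (intro bij_betw_imageI, rule inj_on_subset) (auto dest: fverts_ne[OF internal_sub[THEN subsetD]])
  have b1: "bij_betw lab' (internal ?G) (S - {a})" using lab' unfolding LS_def by blast
  have "bij_betw (?lab \<circ> lmap ?d) (internal ?G) (S - {a})"
    using b1 by (rule bij_betw_cong[THEN iffD1, rotated]) (simp add: ulab_lmap[OF ts])
  then have bX: "bij_betw ?lab ?X (S - {a})" using bij_betw_comp_iff[OF bl] by blast
  have r0: "?lab [0] = a" by (rule ulab_root[OF ts])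
  have "a \<notin> S - {a}" by simp
  then have "bij_betw ?lab (?X \<union> {[0]}) ((S - {a}) \<union> {a})"
    using notIn_Un_bij_betw3[OF nin, of ?lab "S - {a}"] bX r0 by simp
  moreover have "(S - {a}) \<union> {a} = S" using a by auto
  ultimately have "bij_betw ?lab (internal ?F) S" using iF by simp
  moreover have "\<forall>v. v \<notin> internal ?F \<longrightarrow> ?lab v = 0" unfolding ulab_def nrm_def by simp
  ultimately show ?thesis unfolding LS_def by simp
qed

lemma luk_back1:
  assumes ts: "ts \<noteq> []" and lab: "lab \<in> LS (Node ts # F') S"
  shows "ulab (length ts) (internal (Node ts # F')) (lab [0]) (nrm (internal (ts @ F')) (lab \<circ> lmap (length ts))) = lab"
proof
  fix q
  let ?d = "length ts" and ?G = "ts @ F'" and ?F = "Node ts # F'"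
  show "ulab ?d (internal ?F) (lab [0]) (nrm (internal ?G) (lab \<circ> lmap ?d)) q = lab q"
  proof (cases "q \<in> internal ?F")
    case True
    show ?thesis
    proof (cases "q = [0]")
      case True
      then show ?thesis using ulab_root[OF ts] by simp
    next
      case False
      with True obtain w where w: "w \<in> internal ?G" "q = lmap ?d w" using luk_internal[OF ts] by auto
      then show ?thesis using ulab_lmap[OF ts w(1)] by (simp add: nrm_def)
    qed
  next
    case False
    then show ?thesis using lab unfolding LS_def ulab_def nrm_def by simp
  qed
qed

lemma luk_back2:
  assumes ts: "ts \<noteq> []" and lab': "lab' \<in> LS (ts @ F') S'"
  shows "nrm (internal (ts @ F')) (ulab (length ts) (internal (Node ts # F')) a lab' \<circ> lmap (length ts)) = lab'"
proof
  fix w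
  show "nrm (internal (ts @ F')) (ulab (length ts) (internal (Node ts # F')) a lab' \<circ> lmap (length ts)) w = lab' w"
    using ulab_lmap[OF ts] lab' unfolding nrm_def LS_def by auto
qed

lemma luk_proper:
  assumes ts: "ts \<noteq> []" and rel: "\<forall>w\<in>internal (ts @ F'). lab (lmap (length ts) w) = lab' w"
    and v: "v \<in> internal (ts @ F')"
  shows "proper_vertex (Node ts # F') lab (lmap (length ts) v) \<longleftrightarrow> proper_vertex (ts @ F') lab' v"
proof -
  let ?d = "length ts" and ?G = "ts @ F'" and ?F = "Node ts # F'"
  have ne: "\<forall>w\<in>internal ?G. w \<noteq> []" using internal_sub fverts_ne by blast
  have vne: "v \<noteq> []" using v ne by blast
  have "proper_vertex ?F lab (lmap ?d v) \<longleftrightarrow>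
      (\<forall>w\<in>insert [0] (lmap ?d ` internal ?G). descendant w (lmap ?d v) \<longrightarrow> \<not> lab w < lab (lmap ?d v))"
    unfolding proper_vertex_def luk_internal[OF ts] ..
  also have "\<dots> \<longleftrightarrow> (\<forall>w\<in>internal ?G. descendant (lmap ?d w) (lmap ?d v) \<longrightarrow> \<not> lab (lmap ?d w) < lab (lmap ?d v))"
    using root_not_desc[OF vne] by blast
  also have "\<dots> \<longleftrightarrow> (\<forall>w\<in>internal ?G. descendant w v \<longrightarrow> \<not> lab' w < lab' v)"
    using lmap_desc[OF vne] ne rel v by auto
  also have "\<dots> \<longleftrightarrow> proper_vertex ?G lab' v" unfolding proper_vertex_def ..
  finally show ?thesis .
qed

lemma luk_proper_root:
  assumes ts: "ts \<noteq> []" and rel: "\<forall>w\<in>internal (ts @ F'). lab (lmap (length ts) w) = lab' w"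
  shows "proper_vertex (Node ts # F') lab [0] \<longleftrightarrow>
     (\<forall>w\<in>internal (ts @ F'). hd w < length ts \<longrightarrow> \<not> lab' w < lab [0])"
proof -
  let ?d = "length ts" and ?G = "ts @ F'" and ?F = "Node ts # F'"
  have ne: "\<forall>w\<in>internal ?G. w \<noteq> []" using internal_sub fverts_ne by blast
  have "proper_vertex ?F lab [0] \<longleftrightarrow>
      (\<forall>w\<in>insert [0] (lmap ?d ` internal ?G). descendant w [0] \<longrightarrow> \<not> lab w < lab [0])"
    unfolding proper_vertex_def luk_internal[OF ts] ..
  also have "\<dots> \<longleftrightarrow> (\<forall>w\<in>internal ?G. descendant (lmap ?d w) [0] \<longrightarrow> \<not> lab (lmap ?d w) < lab [0])"
    by blast
  also have "\<dots> \<longleftrightarrow> (\<forall>w\<in>internal ?G. hd w < ?d \<longrightarrow> \<not> lab' w < lab [0])"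
    using lmap_desc_root ne rel by auto
  finally show ?thesis .
qed

lemma luk_wt:
  assumes ts: "ts \<noteq> []" and rel: "\<forall>w\<in>internal (ts @ F'). lab (lmap (length ts) w) = lab' w"
  shows "wt k (Node ts # F') lab =
     (length ts + (if proper_vertex (Node ts # F') lab [0] then 0 else k)) * wt k (ts @ F') lab'"
proof -
  let ?d = "length ts" and ?G = "ts @ F'" and ?F = "Node ts # F'"
  let ?h = "\<lambda>v. fdeg ?F v + (if proper_vertex ?F lab v then 0 else k)"
  have nin: "[0] \<notin> lmap ?d ` internal ?G" by (metis imageE lmap_ne0)
  have inj: "inj_on (lmap ?d) (internal ?G)"
    using lmap_inj_on by (rule inj_on_subset) (auto dest: fverts_ne[OF internal_sub[THEN subsetD]])
  have "wt k ?F lab = ?h [0] * (\<Prod>v\<in>lmap ?d ` internal ?G. ?h v)"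
    unfolding wt_def luk_internal[OF ts] using nin by simp
  also have "(\<Prod>v\<in>lmap ?d ` internal ?G. ?h v) = (\<Prod>v\<in>internal ?G. ?h (lmap ?d v))"
    using inj by (simp add: prod.reindex)
  also have "\<dots> = wt k ?G lab'"
    unfolding wt_def
  proof (rule prod.cong[OF refl])
    fix v assume v: "v \<in> internal ?G"
    hence "v \<noteq> []" using internal_sub fverts_ne by blast
    then show "?h (lmap ?d v) = fdeg ?G v + (if proper_vertex ?G lab' v then 0 else k)"
      using luk_fdeg luk_proper[OF ts rel v] by simp
  qed
  finally show ?thesis using luk_fdeg0 by simp
qed

definition rd :: "(nat \<Rightarrow> nat) \<Rightarrow> nat \<Rightarrow> nat \<Rightarrow> nat" where "rd r d = r(d := r d - 1)"

definition unlukP :: "nat \<Rightarrow> ptree list \<times> (nat list \<Rightarrow> nat) \<Rightarrow> ptree list \<times> (nat list \<Rightarrow> nat)" where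
  "unlukP d x = (children (hd (fst x)) @ tl (fst x),
      nrm (internal (children (hd (fst x)) @ tl (fst x))) (snd x \<circ> lmap d))"

definition lukP :: "nat \<Rightarrow> nat \<Rightarrow> ptree list \<times> (nat list \<Rightarrow> nat) \<Rightarrow> ptree list \<times> (nat list \<Rightarrow> nat)" where
  "lukP d a y = (Node (take d (fst y)) # drop d (fst y),
      ulab d (internal (Node (take d (fst y)) # drop d (fst y))) a (snd y))"

definition Aset :: "(nat \<Rightarrow> nat) \<Rightarrow> nat set \<Rightarrow> nat \<Rightarrow> nat \<Rightarrow> (ptree list \<times> (nat list \<Rightarrow> nat)) set" where
  "Aset r S d a = {x \<in> PS r S. intree (fst x) (snd x) (Min S) {0} \<and> fdeg (fst x) [0] = d \<and> snd x [0] = a}"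

definition Bset :: "(nat \<Rightarrow> nat) \<Rightarrow> nat set \<Rightarrow> nat \<Rightarrow> nat \<Rightarrow> (ptree list \<times> (nat list \<Rightarrow> nat)) set" where
  "Bset r S d a = {y \<in> PS (rd r d) (S - {a}). a \<noteq> Min S \<longrightarrow> intree (fst y) (snd y) (Min S) {..<d}}"

lemma intree0_shape:
  assumes "intree F lab m {0}"
  obtains ts F' where "F = Node ts # F'" "ts \<noteq> []"
proof -
  from assms obtain v where v: "v \<in> internal F" "hd v = 0" unfolding intree_def by auto
  have vf: "v \<in> fverts F" using v(1) internal_sub by blast
  then have "F \<noteq> []" using hd_fverts[OF vf] by auto
  then obtain T F' where F: "F = T # F'" by (cases F) auto
  obtain ts where T: "T = Node ts" by (cases T)
  have "ts \<noteq> []"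
  proof
    assume ts: "ts = []"
    have vne: "v \<noteq> []" using vf fverts_ne by blast
    then obtain p where vp: "v = 0 # p" using v(2) by (cases v) auto
    have "subtree (Node F) v \<noteq> None" using vf unfolding fverts_def by auto
    then have "p = []" using vp F T ts by (cases p) auto
    then have "fdeg F v = 0" using vp F T ts unfolding fdeg_def by simp
    then show False using v(1) unfolding internal_def by simp
  qed
  then show ?thesis using that F T by blast
qed

lemma root_proper_iff:
  assumes lab: "lab \<in> LS F S" and S: "finite S" and it: "intree F lab (Min S) {0}"
    and r: "[0] \<in> internal F"
  shows "proper_vertex F lab [0] \<longleftrightarrow> lab [0] = Min S"
proof -
  have b: "bij_betw lab (internal F) S" using lab unfolding LS_def by blast
  have inS: "\<And>w. w \<in> internal F \<Longrightarrow> lab w \<in> S" using b unfolding bij_betw_def by blast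
  show ?thesis
  proof
    assume p: "proper_vertex F lab [0]"
    from it obtain v where v: "v \<in> internal F" "lab v = Min S" "hd v = 0" unfolding intree_def by auto
    have "v \<noteq> []" using v(1) internal_sub fverts_ne by blast
    then have "descendant v [0]" using v(3) unfolding descendant_def by (cases v) auto
    then have "\<not> Min S < lab [0]" using p v unfolding proper_vertex_def by auto
    moreover have "Min S \<le> lab [0]" using inS[OF r] S by simp
    ultimately show "lab [0] = Min S" by simp
  next
    assume e: "lab [0] = Min S"
    show "proper_vertex F lab [0]" unfolding proper_vertex_def
      using inS S e by (simp add: not_less)
  qed
qed

lemma A_facts:
  assumes x: "x \<in> Aset r S d a" and S: "finite S"
  shows "unlukP d x \<in> Bset r S d a" "lukP d a (unlukP d x) = x"
    "(d + (if a = Min S then 0 else k)) * wt k (fst (unlukP d x)) (snd (unlukP d x)) = wt k (fst x) (snd x)"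
proof -
  obtain F lab where x': "x = (F, lab)" by (cases x)
  have F: "F \<in> FT r" and lab: "lab \<in> LS F S" and it: "intree F lab (Min S) {0}"
    and dd: "fdeg F [0] = d" and aa: "lab [0] = a"
    using x x' unfolding Aset_def PS_def by auto
  obtain ts F' where F': "F = Node ts # F'" and ts: "ts \<noteq> []" using intree0_shape[OF it] by blast
  have dts: "length ts = d" using dd F' luk_fdeg0 by simp
  let ?G = "ts @ F'"
  let ?lab' = "nrm (internal ?G) (lab \<circ> lmap d)"
  have ux: "unlukP d x = (?G, ?lab')" unfolding unlukP_def x' F' by simp
  have iF: "internal F = insert [0] (lmap d ` internal ?G)" using luk_internal[OF ts] F' dts by simp
  have G: "?G \<in> FT (rd r d)" using F F' dts luk_type unfolding FT_def rd_def by blast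
  have lab': "?lab' \<in> LS ?G (S - {a})" using luk_LS_fwd[OF ts lab[unfolded F']] dts aa by simp
  have it': "a \<noteq> Min S \<longrightarrow> intree ?G ?lab' (Min S) {..<d}"
  proof
    assume ne: "a \<noteq> Min S"
    from it obtain v where v: "v \<in> internal F" "lab v = Min S" "hd v = 0" unfolding intree_def by auto
    have "v \<noteq> [0]" using v(2) aa ne by auto
    then obtain w where w: "w \<in> internal ?G" "v = lmap d w" using v(1) iF by auto
    have wne: "w \<noteq> []" using w(1) internal_sub fverts_ne by blast
    have "hd w < d" using hd_lmap[OF wne, of d] w v(3) by simp
    moreover have "?lab' w = Min S" using w v(2) by (simp add: nrm_def)
    ultimately show "intree ?G ?lab' (Min S) {..<d}" using w(1) unfolding intree_def by auto
  qed
  show "unlukP d x \<in> Bset r S d a" unfolding ux Bset_def PS_def using G lab' it' by simp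
  show "lukP d a (unlukP d x) = x"
    unfolding ux lukP_def using luk_back1[OF ts, of lab F' S] lab F' dts aa x' by simp
  have rel: "\<forall>w\<in>internal ?G. lab (lmap (length ts) w) = ?lab' w" using dts by (simp add: nrm_def)
  have r0: "[0] \<in> internal F" using iF by simp
  have "wt k F lab = (d + (if proper_vertex F lab [0] then 0 else k)) * wt k ?G ?lab'"
    using luk_wt[OF ts rel, of k] F' dts by simp
  also have "proper_vertex F lab [0] \<longleftrightarrow> a = Min S"
    using root_proper_iff[OF lab S it r0] aa by simp
  finally have w: "wt k F lab = (d + (if a = Min S then 0 else k)) * wt k ?G ?lab'" .
  have e1: "fst (unlukP d x) = ?G" "snd (unlukP d x) = ?lab'" using ux by simp_all
  have e2: "fst x = F" "snd x = lab" using x' by simp_all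
  show "(d + (if a = Min S then 0 else k)) * wt k (fst (unlukP d x)) (snd (unlukP d x)) = wt k (fst x) (snd x)"
    unfolding e1 e2 using w by simp
qed

lemma B_facts:
  assumes y: "y \<in> Bset r S d a" and d: "1 \<le> d" and rd1: "1 \<le> r d" and a: "a \<in> S"
    and len: "d \<le> length (fst y)"
  shows "lukP d a y \<in> Aset r S d a" "unlukP d (lukP d a y) = y"
proof -
  obtain G lab' where y': "y = (G, lab')" by (cases y)
  have G: "G \<in> FT (rd r d)" and lab': "lab' \<in> LS G (S - {a})"
    and it: "a \<noteq> Min S \<longrightarrow> intree G lab' (Min S) {..<d}"
    using y y' unfolding Bset_def PS_def by auto
  let ?ts = "take d G" and ?F' = "drop d G"
  have dts: "length ?ts = d" using len y' by simp
  have ts: "?ts \<noteq> []" using dts d by auto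
  have GG: "?ts @ ?F' = G" by simp
  let ?F = "Node ?ts # ?F'"
  let ?lab = "ulab d (internal ?F) a lab'"
  have ly: "lukP d a y = (?F, ?lab)" unfolding lukP_def y' by simp
  have iF: "internal ?F = insert [0] (lmap d ` internal G)" using luk_internal[OF ts, of ?F'] dts by simp
  have F: "?F \<in> FT r" using luk_type[of ?ts ?F' r] G rd1 dts unfolding FT_def rd_def by simp
  have lab: "?lab \<in> LS ?F S" using luk_LS_bwd[OF ts, of lab' ?F' S a] lab' a dts by simp
  have aa: "?lab [0] = a" using ulab_root[OF ts, of ?F' a lab'] dts by simp
  have dd: "fdeg ?F [0] = d" using luk_fdeg0 dts by simp
  have it': "intree ?F ?lab (Min S) {0}"
  proof (cases "a = Min S")
    case True
    then show ?thesis using aa iF unfolding intree_def by auto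
  next
    case False
    with it obtain w where w: "w \<in> internal G" "lab' w = Min S" "hd w < d" unfolding intree_def by auto
    have wne: "w \<noteq> []" using w(1) internal_sub fverts_ne by blast
    have "?lab (lmap d w) = Min S" using ulab_lmap[OF ts, of w ?F' a lab'] w dts by simp
    moreover have "hd (lmap d w) = 0" using hd_lmap[OF wne] w(3) by simp
    moreover have "lmap d w \<in> internal ?F" using iF w(1) by simp
    ultimately show ?thesis unfolding intree_def by blast
  qed
  show "lukP d a y \<in> Aset r S d a" unfolding ly Aset_def PS_def using F lab it' aa dd by simp
  show "unlukP d (lukP d a y) = y"
  proof -
    have "unlukP d (lukP d a y) = (G, nrm (internal G) (?lab \<circ> lmap d))"
      unfolding ly unlukP_def using GG by simp
    then show ?thesis using luk_back2[OF ts, of lab' ?F' "S - {a}" a] lab' dts y' by simp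
  qed
qed

lemma Aset_sum:
  assumes d: "1 \<le> d" and rd1: "1 \<le> r d" and a: "a \<in> S" and S: "finite S"
    and len: "\<forall>G\<in>FT (rd r d). d \<le> length G"
  shows "(\<Sum>x\<in>Aset r S d a. wt k (fst x) (snd x)) =
     (d + (if a = Min S then 0 else k)) * (\<Sum>y\<in>Bset r S d a. wt k (fst y) (snd y))"
proof -
  have lenB: "\<And>y. y \<in> Bset r S d a \<Longrightarrow> d \<le> length (fst y)"
    using len unfolding Bset_def PS_def by auto
  have B2: "\<And>y. y \<in> Bset r S d a \<Longrightarrow> unlukP d (lukP d a y) = y"
    using B_facts(2)[where r=r and d=d and S=S and a=a, OF _ d rd1 a] lenB by blast
  have B1: "\<And>y. y \<in> Bset r S d a \<Longrightarrow> lukP d a y \<in> Aset r S d a"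
    using B_facts(1)[where r=r and d=d and S=S and a=a, OF _ d rd1 a] lenB by blast
  have "(\<Sum>x\<in>Aset r S d a. wt k (fst x) (snd x)) =
     (\<Sum>y\<in>Bset r S d a. (d + (if a = Min S then 0 else k)) * wt k (fst y) (snd y))"
    apply (rule sum.reindex_bij_witness[where j = "unlukP d" and i = "lukP d a"])
    apply (erule A_facts(2)[OF _ S])
    apply (erule A_facts(1)[OF _ S])
    apply (erule B2)
    apply (erule B1)
    apply (erule A_facts(3)[OF _ S])
    done
  then show ?thesis by (simp add: sum_distrib_left)
qed

lemma Aset_empty:
  assumes "r d = 0"
  shows "Aset r S d a = {}"
proof (rule ccontr)
  assume "Aset r S d a \<noteq> {}"
  then obtain x where x: "x \<in> Aset r S d a" by blast
  obtain F lab where x': "x = (F, lab)" by (cases x)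
  have F: "F \<in> FT r" and it: "intree F lab (Min S) {0}" and dd: "fdeg F [0] = d"
    using x x' unfolding Aset_def PS_def by auto
  obtain ts F' where F': "F = Node ts # F'" "ts \<noteq> []" using intree0_shape[OF it] by blast
  have "length ts = d" using dd F' luk_fdeg0 by simp
  then have "1 \<le> r d" using F F' luk_type unfolding FT_def by blast
  then show False using assms by simp
qed

lemma Min_remove:
  assumes "finite S" "a \<in> S" "a \<noteq> Min S"
  shows "Min (S - {a}) = Min S"
proof -
  have m: "Min S \<in> S" using assms by (metis Min_in empty_iff)
  have "Min S \<in> S - {a}" using m assms by simp
  moreover have "\<forall>x\<in>S - {a}. Min S \<le> x" using assms by simp
  ultimately show ?thesis using assms by (intro Min_eqI) auto
qed

lemma Bset_Min:
  shows "(\<Sum>y\<in>Bset r S d (Min S). wt k (fst y) (snd y)) = Tsum k (rd r d) (S - {Min S})"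
  unfolding Bset_def Tsum_def by simp

lemma Bset_other:
  assumes "finite S" "a \<in> S" "a \<noteq> Min S"
  shows "(\<Sum>y\<in>Bset r S d a. wt k (fst y) (snd y)) = Usum k (rd r d) (S - {a}) {..<d}"
  unfolding Bset_def Usum_def Min_remove[OF assms] using assms(3) by simp

lemma Usum_decomp:
  assumes N: "\<forall>i>N. r i = 0" and S: "finite S" "S \<noteq> {}"
    and len: "\<forall>d. 1 \<le> d \<longrightarrow> 1 \<le> r d \<longrightarrow> (\<forall>G\<in>FT (rd r d). d \<le> length G)"
  shows "Usum k r S {0} = (\<Sum>d\<in>{1..N}. if r d = 0 then 0 else
      d * Tsum k (rd r d) (S - {Min S}) + (d + k) * (\<Sum>a\<in>S - {Min S}. Usum k (rd r d) (S - {a}) {..<d}))"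
proof -
  let ?A = "{x\<in>PS r S. intree (fst x) (snd x) (Min S) {0}}"
  let ?key = "\<lambda>x. (fdeg (fst x) [0], snd x [0])"
  let ?w = "\<lambda>x. wt k (fst x) (snd x)"
  have finA: "finite ?A" using PS_finite[OF N S(1)] by simp
  have sub: "?key ` ?A \<subseteq> {1..N} \<times> S"
  proof
    fix z assume "z \<in> ?key ` ?A"
    then obtain x where x: "x \<in> ?A" "z = ?key x" by blast
    obtain F lab where x': "x = (F, lab)" by (cases x)
    have F: "F \<in> FT r" and lab: "lab \<in> LS F S" and it: "intree F lab (Min S) {0}"
      using x x' unfolding PS_def by auto
    obtain ts F' where F': "F = Node ts # F'" "ts \<noteq> []" using intree0_shape[OF it] by blast
    have "1 \<le> r (length ts)" using F F' luk_type unfolding FT_def by blast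
    then have l1: "length ts \<le> N" using N by (metis not_le not_one_le_zero)
    have l2: "1 \<le> length ts" using F'(2) by (cases ts) auto
    have "[0] \<in> internal F" using luk_internal[OF F'(2)] F'(1) by simp
    then have l3: "lab [0] \<in> S" using lab unfolding LS_def bij_betw_def by auto
    show "z \<in> {1..N} \<times> S" using x(2) x' F'(1) luk_fdeg0 l1 l2 l3 by simp
  qed
  have "Usum k r S {0} = (\<Sum>z\<in>{1..N} \<times> S. sum ?w {x\<in>?A. ?key x = z})"
    unfolding Usum_def by (rule sum.group[OF finA _ sub, symmetric]) (simp add: S(1))
  also have "\<dots> = (\<Sum>(d, a)\<in>{1..N} \<times> S. sum ?w (Aset r S d a))"
  proof (rule sum.cong[OF refl])
    fix z assume "z \<in> {1..N} \<times> S"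
    obtain d a where z: "z = (d, a)" by (cases z)
    have "{x\<in>?A. ?key x = z} = Aset r S d a" unfolding z Aset_def by auto
    then show "sum ?w {x\<in>?A. ?key x = z} = (case z of (d, a) \<Rightarrow> sum ?w (Aset r S d a))"
      using z by simp
  qed
  also have "\<dots> = (\<Sum>d\<in>{1..N}. \<Sum>a\<in>S. sum ?w (Aset r S d a))"
    by (rule sum.cartesian_product[symmetric])
  also have "\<dots> = (\<Sum>d\<in>{1..N}. if r d = 0 then 0 else
      d * Tsum k (rd r d) (S - {Min S}) + (d + k) * (\<Sum>a\<in>S - {Min S}. Usum k (rd r d) (S - {a}) {..<d}))"
  proof (rule sum.cong[OF refl])
    fix d assume d: "d \<in> {1..N}"
    show "(\<Sum>a\<in>S. sum ?w (Aset r S d a)) = (if r d = 0 then 0 else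
      d * Tsum k (rd r d) (S - {Min S}) + (d + k) * (\<Sum>a\<in>S - {Min S}. Usum k (rd r d) (S - {a}) {..<d}))"
    proof (cases "r d = 0")
      case True
      then show ?thesis using Aset_empty by simp
    next
      case False
      then have rd1: "1 \<le> r d" by simp
      have d1: "1 \<le> d" using d by simp
      have lenD: "\<forall>G\<in>FT (rd r d). d \<le> length G" using len d1 rd1 by blast
      have m: "Min S \<in> S" using S by simp
      have "(\<Sum>a\<in>S. sum ?w (Aset r S d a)) =
          sum ?w (Aset r S d (Min S)) + (\<Sum>a\<in>S - {Min S}. sum ?w (Aset r S d a))"
        using S(1) m by (rule sum.remove)
      also have "sum ?w (Aset r S d (Min S)) = d * Tsum k (rd r d) (S - {Min S})"
        using Aset_sum[OF d1 rd1 m S(1) lenD, of k] Bset_Min[where r=r and S=S and d=d and k=k] by simp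
      also have "(\<Sum>a\<in>S - {Min S}. sum ?w (Aset r S d a)) =
          (\<Sum>a\<in>S - {Min S}. (d + k) * Usum k (rd r d) (S - {a}) {..<d})"
      proof (rule sum.cong[OF refl])
        fix a assume a: "a \<in> S - {Min S}"
        then have aS: "a \<in> S" and an: "a \<noteq> Min S" by auto
        show "sum ?w (Aset r S d a) = (d + k) * Usum k (rd r d) (S - {a}) {..<d}"
          using Aset_sum[OF d1 rd1 aS S(1) lenD, of k] Bset_other[OF S(1) aS an, where r=r and d=d and k=k] an by simp
      qed
      finally show ?thesis using False by (simp add: sum_distrib_left)
    qed
  qed
  finally show ?thesis .
qed

definition lenr :: "(nat \<Rightarrow> nat) \<Rightarrow> nat \<Rightarrow> int" where
  "lenr r N = int (r 0) - (\<Sum>d=1..N. (int d - 1) * int (r d))"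
definition nr :: "(nat \<Rightarrow> nat) \<Rightarrow> nat \<Rightarrow> nat" where
  "nr r N = (\<Sum>d=1..N. r d)"
definition RR :: "(nat \<Rightarrow> nat) \<Rightarrow> nat \<Rightarrow> nat" where
  "RR r N = (\<Prod>d=1..N. fact (r d))"
definition QQ :: "(nat \<Rightarrow> nat) \<Rightarrow> nat \<Rightarrow> nat" where
  "QQ r N = (\<Prod>d=1..N. d ^ r d)"
definition PP :: "(nat \<Rightarrow> nat) \<Rightarrow> nat \<Rightarrow> nat \<Rightarrow> nat" where
  "PP r n k = (\<Prod>i=1..n - 1. r 0 + i * (1 + k))"

lemma rd_other: "i \<noteq> d \<Longrightarrow> rd r d i = r i" unfolding rd_def by simp
lemma rd_same: "rd r d d = r d - 1" unfolding rd_def by simp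

lemma sum_rd:
  fixes f :: "nat \<Rightarrow> 'a::comm_ring_1"
  assumes A: "finite A" "d \<in> A" and r: "1 \<le> r d"
  shows "(\<Sum>i\<in>A. f i * of_nat (rd r d i)) = (\<Sum>i\<in>A. f i * of_nat (r i)) - f d"
proof -
  have "(\<Sum>i\<in>A. f i * of_nat (rd r d i)) = f d * of_nat (rd r d d) + (\<Sum>i\<in>A - {d}. f i * of_nat (rd r d i))"
    using A by (rule sum.remove)
  also have "(\<Sum>i\<in>A - {d}. f i * of_nat (rd r d i)) = (\<Sum>i\<in>A - {d}. f i * of_nat (r i))"
    by (rule sum.cong) (auto simp: rd_other)
  also have "(\<Sum>i\<in>A. f i * of_nat (r i)) = f d * of_nat (r d) + (\<Sum>i\<in>A - {d}. f i * of_nat (r i))"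
    using A by (rule sum.remove)
  moreover have "of_nat (rd r d d) = (of_nat (r d) - 1 :: 'a)" using r by (simp add: rd_same of_nat_diff)
  ultimately show ?thesis by (simp add: algebra_simps)
qed

lemma prod_rd:
  fixes g :: "nat \<Rightarrow> nat \<Rightarrow> nat"
  assumes A: "finite A" "d \<in> A"
  shows "(\<Prod>i\<in>A. g i (r i)) = g d (r d) * (\<Prod>i\<in>A - {d}. g i (rd r d i))"
    "(\<Prod>i\<in>A. g i (rd r d i)) = g d (r d - 1) * (\<Prod>i\<in>A - {d}. g i (rd r d i))"
proof -
  have e: "(\<Prod>i\<in>A - {d}. g i (rd r d i)) = (\<Prod>i\<in>A - {d}. g i (r i))"
    by (rule prod.cong) (auto simp: rd_other)
  show "(\<Prod>i\<in>A. g i (r i)) = g d (r d) * (\<Prod>i\<in>A - {d}. g i (rd r d i))"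
    unfolding e using A by (rule prod.remove)
  show "(\<Prod>i\<in>A. g i (rd r d i)) = g d (r d - 1) * (\<Prod>i\<in>A - {d}. g i (rd r d i))"
    using prod.remove[OF A, of "\<lambda>i. g i (rd r d i)"] by (simp add: rd_same)
qed

lemma RR_rd:
  assumes d: "d \<in> {1..N}" and r: "1 \<le> r d"
  shows "RR r N = r d * RR (rd r d) N"
proof -
  obtain m where m: "r d = Suc m" using r by (cases "r d") auto
  show ?thesis unfolding RR_def using prod_rd[OF _ d, of "\<lambda>i x. fact x" r] m by (simp add: algebra_simps)
qed

lemma QQ_rd:
  assumes d: "d \<in> {1..N}" and r: "1 \<le> r d"
  shows "QQ r N = d * QQ (rd r d) N"
proof -
  obtain m where m: "r d = Suc m" using r by (cases "r d") auto
  show ?thesis unfolding QQ_def using prod_rd[OF _ d, of "\<lambda>i x. i ^ x" r] m by (simp add: algebra_simps)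
qed

lemma nr_rd:
  assumes d: "d \<in> {1..N}" and r: "1 \<le> r d"
  shows "int (nr (rd r d) N) = int (nr r N) - 1"
  using sum_rd[where r=r and d=d, OF _ d r, where f= "\<lambda>_. 1 :: int"] unfolding nr_def of_nat_sum by simp

lemma lenr_rd:
  assumes d: "d \<in> {1..N}" and r: "1 \<le> r d"
  shows "lenr (rd r d) N = lenr r N + int d - 1"
proof -
  have "(\<Sum>i=1..N. (int i - 1) * int (rd r d i)) = (\<Sum>i=1..N. (int i - 1) * int (r i)) - (int d - 1)"
    using sum_rd[where r=r and d=d, OF _ d r, where f= "\<lambda>i. int i - 1"] by simp
  moreover have "rd r d 0 = r 0" using d by (simp add: rd_other)
  ultimately show ?thesis unfolding lenr_def by simp
qed

lemma PP_rd:
  assumes d: "1 \<le> d"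
  shows "PP (rd r d) n k = PP r n k"
  using d unfolding PP_def by (simp add: rd_other)

lemma supp_rd: "\<forall>i>N. r i = 0 \<Longrightarrow> \<forall>i>N. rd r d i = 0"
  unfolding rd_def by simp

lemma fverts_deg_union:
  assumes t: "has_type F r" and N: "\<forall>i>N. r i = 0"
  shows "fverts F = (\<Union>i\<in>{..N}. {v\<in>fverts F. fdeg F v = i})"
proof (intro equalityI subsetI)
  fix v assume v: "v \<in> fverts F"
  have "fdeg F v \<le> N"
  proof (rule ccontr)
    assume "\<not> fdeg F v \<le> N"
    then have "r (fdeg F v) = 0" using N by simp
    then have "card {w\<in>fverts F. fdeg F w = fdeg F v} = 0" using t unfolding has_type_def by simp
    moreover have "v \<in> {w\<in>fverts F. fdeg F w = fdeg F v}" using v by simp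
    moreover have "finite {w\<in>fverts F. fdeg F w = fdeg F v}" by simp
    ultimately show False by (metis card_0_eq empty_iff)
  qed
  then show "v \<in> (\<Union>i\<in>{..N}. {v\<in>fverts F. fdeg F v = i})" using v by auto
qed auto

lemma FT_length:
  assumes N: "\<forall>i>N. r i = 0" and F: "F \<in> FT r"
  shows "int (length F) = lenr r N"
proof -
  have t: "has_type F r" using F unfolding FT_def by simp
  define A where "A i = {v\<in>fverts F. fdeg F v = i}" for i
  have u: "fverts F = (\<Union>i\<in>{..N}. A i)" unfolding A_def by (rule fverts_deg_union[OF t N])
  let ?g = "\<lambda>v. 1 - int (fdeg F v)"
  have "int (length F) = sum ?g (fverts F)" by (rule length_formula)
  also have "\<dots> = sum ?g (\<Union>i\<in>{..N}. A i)" using u by (rule arg_cong)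
  also have "\<dots> = (\<Sum>i\<in>{..N}. sum ?g (A i))"
    by (rule sum.UNION_disjoint) (auto simp: A_def)
  also have "\<dots> = (\<Sum>i\<in>{..N}. int (r i) * (1 - int i))"
  proof (rule sum.cong[OF refl])
    fix i assume "i \<in> {..N}"
    have "sum ?g (A i) = (\<Sum>v\<in>A i. 1 - int i)" by (rule sum.cong) (auto simp: A_def)
    also have "\<dots> = int (card (A i)) * (1 - int i)" by simp
    also have "card (A i) = r i" using t unfolding has_type_def A_def by simp
    finally show "sum ?g (A i) = int (r i) * (1 - int i)" .
  qed
  also have "\<dots> = int (r 0) + (\<Sum>i\<in>{1..N}. int (r i) * (1 - int i))"
  proof -
    have "{..N} = insert 0 {1..N}" by auto
    then show ?thesis by simp
  qed
  also have "(\<Sum>i\<in>{1..N}. int (r i) * (1 - int i)) = (\<Sum>d=1..N. - ((int d - 1) * int (r d)))"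
    by (rule sum.cong) (auto simp: algebra_simps)
  also have "\<dots> = - (\<Sum>d=1..N. (int d - 1) * int (r d))" by (rule sum_negf)
  also have "int (r 0) + - (\<Sum>d=1..N. (int d - 1) * int (r d)) = lenr r N" unfolding lenr_def by simp
  finally show ?thesis .
qed

lemma internal_card:
  assumes t: "has_type F r" and N: "\<forall>i>N. r i = 0"
  shows "card (internal F) = nr r N"
proof -
  have "internal F = (\<Union>i\<in>{1..N}. {v\<in>fverts F. fdeg F v = i})"
    using fverts_deg_union[OF t N] unfolding internal_def by auto
  then have "card (internal F) = card (\<Union>i\<in>{1..N}. {v\<in>fverts F. fdeg F v = i})" by (rule arg_cong)
  also have "\<dots> = (\<Sum>i\<in>{1..N}. card {v\<in>fverts F. fdeg F v = i})"
    by (rule card_UN_disjoint) auto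
  also have "\<dots> = nr r N" using t unfolding has_type_def nr_def by simp
  finally show ?thesis .
qed

section \<open>Forests without internal vertices\<close>

lemma fverts_leaves: "fverts (replicate c (Node [])) = (\<lambda>i. [i]) ` {..<c}"
proof (intro equalityI subsetI)
  fix q assume q: "q \<in> fverts (replicate c (Node []))"
  then obtain i p where qi: "q = i # p" using fverts_ne by (cases q) auto
  have "subtree (Node (replicate c (Node []))) q \<noteq> None" using q unfolding fverts_def by auto
  then have "i < c" "p = []" using qi by (auto split: if_splits, cases p, auto)
  then show "q \<in> (\<lambda>i. [i]) ` {..<c}" using qi by auto
next
  fix q assume "q \<in> (\<lambda>i. [i]) ` {..<c}"
  then show "q \<in> fverts (replicate c (Node []))" unfolding fverts_def by auto
qed

lemma fdeg_leaves: "i < c \<Longrightarrow> fdeg (replicate c (Node [])) [i] = 0"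
  unfolding fdeg_def by simp

lemma leaves_type:
  assumes r: "\<forall>i\<ge>1. r i = 0"
  shows "has_type (replicate (r 0) (Node [])) r"
  unfolding has_type_def
proof
  fix i
  let ?F = "replicate (r 0) (Node [])"
  have fd: "\<forall>v\<in>fverts ?F. fdeg ?F v = 0" using fdeg_leaves unfolding fverts_leaves by auto
  show "card {v \<in> fverts ?F. fdeg ?F v = i} = r i"
  proof (cases "i = 0")
    case True
    then have "{v \<in> fverts ?F. fdeg ?F v = i} = fverts ?F" using fd by auto
    moreover have "card (fverts ?F) = r 0" unfolding fverts_leaves
      by (subst card_image) (auto simp: inj_on_def)
    ultimately show ?thesis using True by simp
  next
    case False
    then have "{v \<in> fverts ?F. fdeg ?F v = i} = {}" using fd by auto
    then show ?thesis using False r by simp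
  qed
qed

lemma leaves_unique:
  assumes r: "\<forall>i\<ge>1. r i = 0" and t: "has_type F r"
  shows "F = replicate (r 0) (Node [])"
proof -
  have fd: "\<forall>v\<in>fverts F. fdeg F v = 0"
  proof
    fix v assume v: "v \<in> fverts F"
    show "fdeg F v = 0"
    proof (rule ccontr)
      assume ne: "fdeg F v \<noteq> 0"
      then have "card {w\<in>fverts F. fdeg F w = fdeg F v} = 0" using t r unfolding has_type_def by simp
      moreover have "v \<in> {w\<in>fverts F. fdeg F w = fdeg F v}" using v by simp
      moreover have "finite {w\<in>fverts F. fdeg F w = fdeg F v}" by simp
      ultimately show False by (metis card_0_eq empty_iff)
    qed
  qed
  have leaf: "F ! j = Node []" if j: "j < length F" for j
  proof -
    obtain ts where T: "F ! j = Node ts" by (cases "F ! j")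
    have "[j] \<in> fverts F" using j unfolding fverts_def by simp
    then have "fdeg F [j] = 0" using fd by blast
    then show ?thesis using T j unfolding fdeg_def by simp
  qed
  have N0: "\<forall>i>0. r i = 0" using r by simp
  have "int (length F) = lenr r 0" using FT_length[OF N0] t unfolding FT_def by simp
  then have len: "length F = r 0" unfolding lenr_def by simp
  show ?thesis by (rule nth_equalityI) (simp_all add: len leaf)
qed

lemma Tsum_leaves:
  assumes r: "\<forall>i\<ge>1. r i = 0"
  shows "Tsum k r {} = 1"
proof -
  let ?F = "replicate (r 0) (Node [])"
  have FT: "FT r = {?F}" unfolding FT_def using leaves_type[OF r] leaves_unique[OF r] by blast
  have int: "internal ?F = {}" unfolding internal_def fverts_leaves using fdeg_leaves by auto
  have LS: "LS ?F {} = {\<lambda>_. 0}"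
  proof (intro equalityI subsetI)
    fix lab assume "lab \<in> LS ?F {}"
    then have "\<forall>v. lab v = 0" unfolding LS_def int by simp
    then show "lab \<in> {\<lambda>_. 0}" by (simp add: fun_eq_iff)
  next
    fix lab :: "nat list \<Rightarrow> nat" assume "lab \<in> {\<lambda>_. 0}"
    then show "lab \<in> LS ?F {}" unfolding LS_def int by (simp add: bij_betw_def)
  qed
  have "PS r {} = {(?F, \<lambda>_. 0)}" unfolding PS_def FT using LS by auto
  then show ?thesis unfolding Tsum_def wt_def using int by simp
qed

lemma nr_zero:
  assumes N: "\<forall>i>N. r i = 0" and z: "nr r N = 0"
  shows "\<forall>i\<ge>1. r i = 0"
proof (intro allI impI)
  fix i :: nat assume i: "1 \<le> i"
  show "r i = 0"
  proof (cases "i \<le> N")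
    case True
    then have "i \<in> {1..N}" using i by simp
    then show ?thesis using z unfolding nr_def by simp
  next
    case False then show ?thesis using N by simp
  qed
qed

lemma RR_QQ_zero:
  assumes "\<forall>i\<ge>1. r i = 0"
  shows "RR r N = 1" "QQ r N = 1"
  using assms unfolding RR_def QQ_def by (auto intro!: prod.neutral)

lemma PP_Suc:
  assumes "1 \<le> n0"
  shows "PP r (Suc n0) k = PP r n0 k * (r 0 + n0 * (1 + k))"
proof -
  obtain p where p: "n0 = Suc p" using assms by (cases n0) auto
  show ?thesis unfolding PP_def p by (simp add: prod.cl_ivl_Suc)
qed

lemma main_ind:
  "\<forall>r S. (\<forall>i>N. r i = 0) \<longrightarrow> finite S \<longrightarrow> card S = n \<longrightarrow> 1 \<le> n \<longrightarrow> nr r N = n \<longrightarrow> 1 \<le> lenr r N \<longrightarrow>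
     int (RR r N) * int (Usum k r S {0}) = int (fact n) * int (QQ r N) * int (PP r n k)"
proof (induction n)
  case 0
  then show ?case by simp
next
  case (Suc n0)
  show ?case
  proof (intro allI impI)
    fix r :: "nat \<Rightarrow> nat" and S :: "nat set"
    assume N: "\<forall>i>N. r i = 0" and S: "finite S" and cS: "card S = Suc n0" and "1 \<le> Suc n0"
      and nrr: "nr r N = Suc n0" and L1: "1 \<le> lenr r N"
    let ?m = "Min S" and ?L = "lenr r N"
    have Sne: "S \<noteq> {}" using cS by auto
    have m: "?m \<in> S" using S Sne by simp
    have cSm: "card (S - {?m}) = n0" using cS m S by simp
    have cSa: "card (S - {a}) = n0" if "a \<in> S" for a using cS that S by simp
    have dN: "d \<in> {1..N}" if "1 \<le> d" "1 \<le> r d" for d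
    proof -
      have "d \<le> N" using that N by (metis not_le not_one_le_zero)
      then show ?thesis using that by simp
    qed
    have lenG: "\<forall>G\<in>FT (rd r d). int (length G) = ?L + int d - 1" if "1 \<le> d" "1 \<le> r d" for d
      using FT_length[OF supp_rd[OF N]] lenr_rd[where r=r, OF dN[OF that] that(2)] by simp
    have len: "\<forall>d. 1 \<le> d \<longrightarrow> 1 \<le> r d \<longrightarrow> (\<forall>G\<in>FT (rd r d). d \<le> length G)"
    proof (intro allI impI ballI)
      fix d G assume d: "1 \<le> d" "1 \<le> r d" and G: "G \<in> FT (rd r d)"
      have "int (length G) = ?L + int d - 1" using lenG[OF d] G by blast
      then show "d \<le> length G" using L1 by simp
    qed
    define t where "t d = (if r d = 0 then 0 else
      d * Tsum k (rd r d) (S - {?m}) + (d + k) * (\<Sum>a\<in>S - {?m}. Usum k (rd r d) (S - {a}) {..<d}))" for d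
    have dec: "Usum k r S {0} = (\<Sum>d\<in>{1..N}. t d)"
      unfolding t_def by (rule Usum_decomp[OF N S Sne len])
    define c where "c d = (if n0 = 0 then 1 else ?L + int d - 1 + int n0 * (int d + int k))" for d
    define Z where "Z = int (fact n0) * int (QQ r N) * int (PP r n0 k)"
    have key: "int (RR r N) * int (t d) = int (r d) * Z * c d" if d: "d \<in> {1..N}" for d
    proof (cases "r d = 0")
      case True
      then show ?thesis unfolding t_def by simp
    next
      case False
      then have rd1: "1 \<le> r d" by simp
      have d1: "1 \<le> d" using d by simp
      let ?r' = "rd r d"
      have N': "\<forall>i>N. ?r' i = 0" by (rule supp_rd[OF N])
      have nr': "nr ?r' N = n0" using nr_rd[where r=r, OF d rd1] nrr by simp
      have R: "RR r N = r d * RR ?r' N" by (rule RR_rd[where r=r, OF d rd1])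
      have Q: "QQ r N = d * QQ ?r' N" by (rule QQ_rd[where r=r, OF d rd1])
      have P: "PP ?r' n0 k = PP r n0 k" by (rule PP_rd[OF d1])
      define Ln where "Ln = nat (?L + int d - 1)"
      have iLn: "int Ln = ?L + int d - 1" unfolding Ln_def using L1 d1 by simp
      have lenFT: "\<forall>G\<in>FT ?r'. length G = Ln"
      proof
        fix G assume "G \<in> FT ?r'"
        then have "int (length G) = int Ln" using lenG[OF d1 rd1] iLn by simp
        then show "length G = Ln" by simp
      qed
      have dLn: "d \<le> Ln" using iLn L1 by simp
      have Us: "Usum k ?r' (S - {a}) {..<d} = d * Usum k ?r' (S - {a}) {0}" for a
        using Usum_lessThan[OF N' _ lenFT dLn] S by simp
      have td: "int (t d) = int d * int (Tsum k ?r' (S - {?m})) +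
          (int d + int k) * (\<Sum>a\<in>S - {?m}. int d * int (Usum k ?r' (S - {a}) {0}))"
        using False unfolding t_def by (simp add: Us of_nat_sum)
      show ?thesis
      proof (cases "n0 = 0")
        case True
        have Sm: "S - {?m} = {}" using cSm True S by simp
        have z: "\<forall>i\<ge>1. ?r' i = 0" using nr_zero[OF N'] nr' True by simp
        have T1: "Tsum k ?r' (S - {?m}) = 1" unfolding Sm by (rule Tsum_leaves[OF z])
        have "int (RR r N) * int (t d) = int (r d) * int d"
          using td T1 Sm R RR_QQ_zero(1)[OF z, of N] by simp
        moreover have "Z = int d" unfolding Z_def using True Q RR_QQ_zero(2)[OF z, of N]
          by (simp add: PP_def)
        moreover have "c d = 1" unfolding c_def using True by simp
        ultimately show ?thesis by simp
      next
        case False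
        then have n01: "1 \<le> n0" by simp
        let ?U = "\<lambda>a. Usum k ?r' (S - {a}) {0}"
        define Y where "Y = int (RR ?r' N)"
        define X where "X = int (fact n0) * int (QQ ?r' N) * int (PP r n0 k)"
        have L': "1 \<le> lenr ?r' N" using lenr_rd[where r=r, OF d rd1] L1 d1 by simp
        have IH: "Y * int (?U a) = X" if a: "a \<in> S" for a
        proof -
          have fa: "finite (S - {a})" using S by simp
          have ih: "int (RR ?r' N) * int (Usum k ?r' (S - {a}) {0}) = int (fact n0) * int (QQ ?r' N) * int (PP ?r' n0 k)"
            using Suc.IH N' fa cSa[OF a] n01 nr' L' by blast
          then show ?thesis using P unfolding X_def Y_def by simp
        qed
        have Smne: "S - {?m} \<noteq> {}"
        proof
          assume "S - {?m} = {}"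
          then have "card (S - {?m}) = 0" by (simp only: card.empty)
          then show False using cSm n01 by simp
        qed
        have T: "Tsum k ?r' (S - {?m}) = Ln * ?U ?m"
          using Tsum_Usum[OF N' _ Smne lenFT] S by simp
        have e4: "Y * (\<Sum>a\<in>S - {?m}. int d * int (?U a)) = int d * int n0 * X"
        proof -
          have "Y * (\<Sum>a\<in>S - {?m}. int d * int (?U a)) = (\<Sum>a\<in>S - {?m}. int d * (Y * int (?U a)))"
            by (simp add: sum_distrib_left algebra_simps)
          also have "\<dots> = (\<Sum>a\<in>S - {?m}. int d * X)" using IH by (intro sum.cong) auto
          also have "\<dots> = int d * int n0 * X" using cSm by simp
          finally show ?thesis .
        qed
        have e5: "Y * int (?U ?m) = X" using IH[OF m] .
        have td2: "int (t d) = int d * (int Ln * int (?U ?m)) + (int d + int k) * (\<Sum>a\<in>S - {?m}. int d * int (?U a))"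
          using td T by simp
        have "int (RR r N) * int (t d) = int (r d) * Y * (int d * (int Ln * int (?U ?m)) + (int d + int k) * (\<Sum>a\<in>S - {?m}. int d * int (?U a)))"
          unfolding td2 R Y_def by simp
        also have "\<dots> = int (r d) * (int d * int Ln * (Y * int (?U ?m)) +
            (int d + int k) * (Y * (\<Sum>a\<in>S - {?m}. int d * int (?U a))))"
          by (simp only: algebra_simps)
        also have "\<dots> = int (r d) * (int d * int Ln * X + (int d + int k) * (int d * int n0 * X))"
          unfolding e4 e5 ..
        also have "\<dots> = int (r d) * Z * c d"
        proof -
          have Leq: "lenr r N = int Ln + 1 - int d" using iLn by simp
          show ?thesis unfolding Z_def X_def c_def Q Leq using False by (simp add: algebra_simps)
        qed
        finally show ?thesis .
      qed
    qed
    have "int (RR r N) * int (Usum k r S {0}) = (\<Sum>d\<in>{1..N}. int (RR r N) * int (t d))"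
      unfolding dec by (simp add: of_nat_sum sum_distrib_left)
    also have "\<dots> = (\<Sum>d\<in>{1..N}. int (r d) * Z * c d)" using key by (intro sum.cong) auto
    also have "\<dots> = Z * (\<Sum>d\<in>{1..N}. int (r d) * c d)"
      by (simp add: sum_distrib_left algebra_simps)
    also have "\<dots> = int (fact (Suc n0)) * int (QQ r N) * int (PP r (Suc n0) k)"
    proof (cases "n0 = 0")
      case True
      have "(\<Sum>d\<in>{1..N}. int (r d) * c d) = int (nr r N)"
        unfolding c_def nr_def using True by (simp add: of_nat_sum)
      then show ?thesis unfolding Z_def using True nrr by (simp add: PP_def)
    next
      case False
      then have n01: "1 \<le> n0" by simp
      have s1: "(\<Sum>d=1..N. int (r d)) = int n0 + 1" using nrr unfolding nr_def by (simp add: of_nat_sum[symmetric])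
      have s2: "(\<Sum>d=1..N. (int d - 1) * int (r d)) = int (r 0) - ?L" unfolding lenr_def by simp
      have "(\<Sum>d\<in>{1..N}. int (r d) * c d) =
          (\<Sum>d=1..N. (?L + int n0 * int k + int n0) * int (r d) + (1 + int n0) * ((int d - 1) * int (r d)))"
        unfolding c_def using False by (intro sum.cong) (auto simp: algebra_simps)
      also have "\<dots> = (?L + int n0 * int k + int n0) * (\<Sum>d=1..N. int (r d)) +
          (1 + int n0) * (\<Sum>d=1..N. (int d - 1) * int (r d))"
        by (simp add: sum.distrib sum_distrib_left)
      also have "\<dots> = (int n0 + 1) * (int (r 0) + int n0 * (1 + int k))"
        unfolding s1 s2 by (simp add: algebra_simps)
      finally have "(\<Sum>d\<in>{1..N}. int (r d) * c d) = (int n0 + 1) * (int (r 0) + int n0 * (1 + int k))" .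
      then show ?thesis unfolding Z_def using PP_Suc[OF n01, of r k] by (simp add: algebra_simps)
    qed
    finally show "int (RR r N) * int (Usum k r S {0}) = int (fact (Suc n0)) * int (QQ r N) * int (PP r (Suc n0) k)" .
  qed
qed

lemma card_allowed:
  "card (allowed_colors F lab k v) = fdeg F v + (if proper_vertex F lab v then 0 else k)"
proof -
  have a1: "{Col j | j. 1 \<le> j \<and> j \<le> fdeg F v} = Col ` {1..fdeg F v}" by auto
  have a2: "{Spec j | j. 1 \<le> j \<and> j \<le> k} = Spec ` {1..k}" by auto
  have c1: "card (Col ` {1..fdeg F v}) = fdeg F v" by (subst card_image) (auto simp: inj_on_def)
  have c2: "card (Spec ` {1..k}) = k" by (subst card_image) (auto simp: inj_on_def)
  have dj: "Col ` {1..fdeg F v} \<inter> Spec ` {1..k} = {}" by auto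
  show ?thesis
  proof (cases "proper_vertex F lab v")
    case True
    then show ?thesis unfolding allowed_colors_def a1 using c1 by simp
  next
    case False
    then have "allowed_colors F lab k v = Col ` {1..fdeg F v} \<union> Spec ` {1..k}"
      unfolding allowed_colors_def a1 a2 by simp
    then show ?thesis using c1 c2 dj False by (simp add: card_Un_disjoint)
  qed
qed

lemma finite_allowed: "finite (allowed_colors F lab k v)"
proof -
  have a1: "{Col j | j. 1 \<le> j \<and> j \<le> fdeg F v} = Col ` {1..fdeg F v}" by auto
  have a2: "{Spec j | j. 1 \<le> j \<and> j \<le> k} = Spec ` {1..k}" by auto
  show ?thesis unfolding allowed_colors_def a1 a2 by simp
qed

lemma Cols_eq:
  "{col. is_proper_coloring F lab k col} =
     (\<lambda>f v. if v \<in> internal F then f v else Col 0) ` PiE (internal F) (allowed_colors F lab k)"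
proof (intro equalityI subsetI)
  fix col assume c: "col \<in> {col. is_proper_coloring F lab k col}"
  then have c1: "\<forall>v\<in>internal F. col v \<in> allowed_colors F lab k v"
    and c2: "\<forall>v. v \<notin> internal F \<longrightarrow> col v = Col 0" unfolding is_proper_coloring_def by auto
  have "restrict col (internal F) \<in> PiE (internal F) (allowed_colors F lab k)" using c1 by auto
  moreover have "col = (\<lambda>v. if v \<in> internal F then restrict col (internal F) v else Col 0)"
    using c2 by (auto simp: fun_eq_iff)
  ultimately show "col \<in> (\<lambda>f v. if v \<in> internal F then f v else Col 0) ` PiE (internal F) (allowed_colors F lab k)"
    by blast
next
  fix col assume "col \<in> (\<lambda>f v. if v \<in> internal F then f v else Col 0) ` PiE (internal F) (allowed_colors F lab k)"
  then obtain f where f: "f \<in> PiE (internal F) (allowed_colors F lab k)"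
    and c: "col = (\<lambda>v. if v \<in> internal F then f v else Col 0)" by blast
  show "col \<in> {col. is_proper_coloring F lab k col}"
    unfolding is_proper_coloring_def c using f by auto
qed

lemma Cols_inj:
  "inj_on (\<lambda>f v. if v \<in> internal F then f v else Col 0) (PiE (internal F) (allowed_colors F lab k))"
proof (rule inj_onI)
  fix f g assume f: "f \<in> PiE (internal F) (allowed_colors F lab k)" and g: "g \<in> PiE (internal F) (allowed_colors F lab k)"
    and e: "(\<lambda>v. if v \<in> internal F then f v else Col 0) = (\<lambda>v. if v \<in> internal F then g v else Col 0)"
  show "f = g"
  proof
    fix v show "f v = g v"
    proof (cases "v \<in> internal F")
      case True
      have "(\<lambda>v. if v \<in> internal F then f v else Col 0) v = (\<lambda>v. if v \<in> internal F then g v else Col 0) v"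
        using e by (rule fun_cong)
      then show ?thesis using True by (simp only: if_True)
    next
      case False
      show ?thesis using PiE_arb[OF f False] PiE_arb[OF g False] by (rule trans[OF _ sym])
    qed
  qed
qed

lemma card_Cols: "card {col. is_proper_coloring F lab k col} = wt k F lab"
  unfolding Cols_eq wt_def
  using card_image[OF Cols_inj] card_PiE[of "internal F" "allowed_colors F lab k"] card_allowed
  by simp

lemma finite_Cols: "finite {col. is_proper_coloring F lab k col}"
  unfolding Cols_eq using finite_allowed by (intro finite_imageI finite_PiE) auto

lemma CF_card:
  assumes N: "\<forall>i>N. r i = 0"
  shows "card (CF r k) = Tsum k r {1..nr r N}"
proof -
  let ?n = "nr r N"
  let ?C = "\<lambda>x. {col. is_proper_coloring (fst x) (snd x) k col}"
  let ?f = "\<lambda>(x, col). (fst x, snd x, col)"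
  have eq: "CF r k = ?f ` Sigma (PS r {1..?n}) ?C"
  proof (intro equalityI subsetI)
    fix z assume z: "z \<in> CF r k"
    then obtain F lab col where zz: "z = (F, lab, col)" and t: "has_type F r"
      and l: "is_labelling F lab" and c: "is_proper_coloring F lab k col" unfolding CF_def by auto
    have "card (internal F) = ?n" by (rule internal_card[OF t N])
    then have "lab \<in> LS F {1..?n}" using l unfolding is_labelling_def LS_def by simp
    then have "((F, lab), col) \<in> Sigma (PS r {1..?n}) ?C" using t c unfolding PS_def FT_def by simp
    then show "z \<in> ?f ` Sigma (PS r {1..?n}) ?C" using zz by force
  next
    fix z assume "z \<in> ?f ` Sigma (PS r {1..?n}) ?C"
    then obtain F lab col where zz: "z = (F, lab, col)" and t: "has_type F r"
      and l: "lab \<in> LS F {1..?n}" and c: "is_proper_coloring F lab k col"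
      unfolding PS_def FT_def by auto
    have "card (internal F) = ?n" by (rule internal_card[OF t N])
    then have "is_labelling F lab" using l unfolding is_labelling_def LS_def by simp
    then show "z \<in> CF r k" using zz t c unfolding CF_def by simp
  qed
  have inj: "inj_on ?f (Sigma (PS r {1..?n}) ?C)" by (auto simp: inj_on_def)
  have "card (CF r k) = card (Sigma (PS r {1..?n}) ?C)" unfolding eq using inj by (rule card_image)
  also have "\<dots> = (\<Sum>x\<in>PS r {1..?n}. card (?C x))"
    using PS_finite[OF N, of "{1..?n}"] finite_Cols by (intro card_SigmaI) auto
  also have "\<dots> = Tsum k r {1..?n}" unfolding Tsum_def using card_Cols by simp
  finally show ?thesis .
qed

lemma prod_fact_dvd:
  fixes f :: "nat \<Rightarrow> nat"
  assumes "finite A"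
  shows "(\<Prod>d\<in>A. fact (f d)) dvd (fact (\<Sum>d\<in>A. f d) :: nat)"
  using assms
proof (induction A rule: finite_induct)
  case empty
  then show ?case by simp
next
  case (insert x A)
  have "(\<Prod>d\<in>insert x A. fact (f d)) = (fact (f x) * (\<Prod>d\<in>A. fact (f d)) :: nat)" using insert by simp
  also have "\<dots> dvd fact (f x) * fact (\<Sum>d\<in>A. f d)" using insert.IH by (simp add: mult_dvd_mono)
  also have "\<dots> dvd fact (f x + (\<Sum>d\<in>A. f d))" by (rule fact_fact_dvd_fact)
  also have "f x + (\<Sum>d\<in>A. f d) = (\<Sum>d\<in>insert x A. f d)" using insert by simp
  finally show ?case .
qed

theorem proposition3p3:
  fixes r :: "nat \<Rightarrow> nat" and k :: nat
  assumes fin: "finite {d. r d \<noteq> 0}"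
    and n_pos: "(\<Sum>d\<in>{d. r d \<noteq> 0 \<and> d \<ge> 1}. r d) \<ge> 1"
    and l_pos: "- (\<Sum>d\<in>{d. r d \<noteq> 0}. (int d - 1) * int (r d)) \<ge> 1"
  shows "int (card (CF r k)) =
      int (multinomial (\<Sum>d\<in>{d. r d \<noteq> 0 \<and> d \<ge> 1}. r d) {d. r d \<noteq> 0 \<and> d \<ge> 1} r)
      * (- (\<Sum>d\<in>{d. r d \<noteq> 0}. (int d - 1) * int (r d)))
      * int (\<Prod>d\<in>{d. r d \<noteq> 0 \<and> d \<ge> 1}. d ^ r d)
      * int (\<Prod>i\<in>{1..(\<Sum>d\<in>{d. r d \<noteq> 0 \<and> d \<ge> 1}. r d) - 1}. r 0 + i * (1 + k))"
proof -
  obtain N where N0: "\<forall>d\<in>{d. r d \<noteq> 0}. d \<le> N" using fin finite_nat_set_iff_bounded_le by blast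
  have N: "\<forall>i>N. r i = 0"
  proof (intro allI impI)
    fix i assume i: "N < i"
    show "r i = 0"
    proof (rule ccontr)
      assume "r i \<noteq> 0"
      then have "i \<le> N" using N0 by simp
      then show False using i by simp
    qed
  qed
  let ?D = "{d. r d \<noteq> 0 \<and> d \<ge> 1}"
  have Dsub: "?D \<subseteq> {1..N}" using N0 by auto
  have n_eq: "(\<Sum>d\<in>?D. r d) = nr r N" unfolding nr_def
  proof (rule sum.mono_neutral_left)
    show "finite {1..N}" by simp
    show "?D \<subseteq> {1..N}" by (rule Dsub)
    show "\<forall>i\<in>{1..N} - ?D. r i = 0"
    proof
      fix i assume "i \<in> {1..N} - ?D"
      then have "1 \<le> i" "i \<notin> ?D" by auto
      then show "r i = 0" by auto
    qed
  qed
  have z: "r i = 0" if i: "i \<in> {1..N} - ?D" for i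
  proof -
    have i1: "1 \<le> i" using i by simp
    have ni: "i \<notin> ?D" using i by blast
    show "r i = 0"
    proof (rule ccontr)
      assume "r i \<noteq> 0"
      then have "i \<in> ?D" using i1 by simp
      then show False using ni by contradiction
    qed
  qed
  have R_eq: "(\<Prod>d\<in>?D. fact (r d)) = RR r N" unfolding RR_def
  proof (rule prod.mono_neutral_left)
    show "finite {1..N}" by simp
    show "?D \<subseteq> {1..N}" by (rule Dsub)
    show "\<forall>i\<in>{1..N} - ?D. fact (r i) = 1"
    proof
      fix i assume "i \<in> {1..N} - ?D"
      then have "r i = 0" by (rule z)
      then show "fact (r i) = 1" by simp
    qed
  qed
  have Q_eq: "(\<Prod>d\<in>?D. d ^ r d) = QQ r N" unfolding QQ_def
  proof (rule prod.mono_neutral_left)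
    show "finite {1..N}" by simp
    show "?D \<subseteq> {1..N}" by (rule Dsub)
    show "\<forall>i\<in>{1..N} - ?D. i ^ r i = 1"
    proof
      fix i assume "i \<in> {1..N} - ?D"
      then have "r i = 0" by (rule z)
      then show "i ^ r i = 1" by simp
    qed
  qed
  have L_eq: "- (\<Sum>d\<in>{d. r d \<noteq> 0}. (int d - 1) * int (r d)) = lenr r N"
  proof -
    have "(\<Sum>d\<in>{d. r d \<noteq> 0}. (int d - 1) * int (r d)) = (\<Sum>d\<in>{..N}. (int d - 1) * int (r d))"
      by (rule sum.mono_neutral_left) (use N0 in auto)
    also have "\<dots> = (\<Sum>d\<in>insert 0 {1..N}. (int d - 1) * int (r d))"
    proof -
      have "{..N} = insert 0 {1..N}" by auto
      then show ?thesis by simp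
    qed
    also have "\<dots> = - int (r 0) + (\<Sum>d=1..N. (int d - 1) * int (r d))" by simp
    finally show ?thesis unfolding lenr_def by simp
  qed
  let ?n = "nr r N"
  let ?L = "lenr r N"
  have n1: "1 \<le> ?n" using n_pos n_eq by simp
  have L1: "1 \<le> ?L" using l_pos L_eq by simp
  define Ln where "Ln = nat ?L"
  have iLn: "int Ln = ?L" unfolding Ln_def using L1 by simp
  have lenFT: "\<forall>F\<in>FT r. length F = Ln"
  proof
    fix F assume "F \<in> FT r"
    then have "int (length F) = int Ln" using FT_length[OF N] iLn by simp
    then show "length F = Ln" by simp
  qed
  have ne: "{1..?n} \<noteq> {}" using n1 by simp
  have card: "card (CF r k) = Ln * Usum k r {1..?n} {0}"
    using CF_card[OF N] Tsum_Usum[OF N _ ne lenFT] by simp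
  have main: "int (RR r N) * int (Usum k r {1..?n} {0}) = int (fact ?n) * int (QQ r N) * int (PP r ?n k)"
    using main_ind[of N ?n k] N n1 L1 by simp
  have dv: "RR r N dvd fact ?n" using prod_fact_dvd[of ?D r] fin n_eq R_eq by simp
  then obtain M where M: "fact ?n = RR r N * M" by (elim dvdE)
  have Rpos: "0 < RR r N" unfolding RR_def by (simp add: prod_pos)
  have multi: "multinomial (nr r N) ?D r = M"
    unfolding multinomial_def R_eq M using Rpos by simp
  have "int (RR r N) * int (Usum k r {1..?n} {0}) = int (RR r N) * (int M * int (QQ r N) * int (PP r ?n k))"
    using main M by (simp add: algebra_simps)
  then have U: "int (Usum k r {1..?n} {0}) = int M * int (QQ r N) * int (PP r ?n k)"
    using Rpos by simp
  have PPf: "(\<Prod>i\<in>{1..nr r N - 1}. r 0 + i * (1 + k)) = PP r (nr r N) k" unfolding PP_def ..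
  have "int (card (CF r k)) = int Ln * int (Usum k r {1..?n} {0})" using card by simp
  also have "\<dots> = int M * ?L * int (QQ r N) * int (PP r ?n k)" using U iLn by simp
  finally show ?thesis
    unfolding n_eq Q_eq L_eq PPf multi .
qed


end
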